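(* Let $r\geq1$ be odd, $m\geq 3$, $n=(r+1)m$, let $u$ be an integer with $\gcd(u,2^m-1)=1$, let $\alpha$ be a primitive element of $\mathbb{F}_{2^{rm}}$, and let $0\leq s\leq 2^{rm}-2$ be an integer. Let $\Delta_s=\{\alpha^i\mid s\leq i\leq s+2^{rm-1}-1\}$ and let $f\colon\mathbb{F}_{2^{rm}}\times\mathbb{F}_{2^m}\to\mathbb{F}_2$ be the Boolean function with $$\mathrm{supp}(f)=\{(\gamma y^u,y)\mid y\in\mathbb{F}_{2^m}^*,\ \gamma\in\Delta_s\}.$$ Then the bivariate representation of $f$ over $\mathbb{F}_{2^{rm}}\times\mathbb{F}_{2^m}$ is $$f(x,y)=\sum_{\substack{i=1\\(2^m-1)\nmid i}}^{2^{rm}-2}\alpha^{-is}(1+\alpha^{-i})^{2^{rm-1}-1}x^iy^{2^m-1-\overline{ui}}+\sum_{j=1}^{\frac{2^{rm}-1}{2^m-1}-1}\alpha^{-(2^m-1)js}\bigl(1+\alpha^{-(2^m-1)j}\bigr)^{2^{rm-1}-1}x^{(2^m-1)j}y^{2^m-1},$$ where $\overline{ui}$ denotes the reduction of $ui$ modulo $2^m-1$ in $\{0,1,\dots,2^m-2\}$. Consequently $n-m\leq\deg f\leq n-2$.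
   Context: $\mathbb{F}_{2^m}$ is a subfield of $\mathbb{F}_{2^{rm}}$, so $\gamma y^u\in\mathbb{F}_{2^{rm}}$. $\mathbb{F}_{2^{rm}}\times\mathbb{F}_{2^m}$ is viewed as an $n$-dimensional $\mathbb{F}_2$-vector space. The bivariate representation of a Boolean function on $\mathbb{F}_{2^{rm}}\times\mathbb{F}_{2^m}$ is the unique polynomial $\sum_{i=0}^{2^{rm}-1}\sum_{j=0}^{2^m-1}c_{i,j}x^iy^j$ with $c_{i,j}\in\mathbb{F}_{2^{rm}}$ that agrees with the function everywhere. $\deg f$ denotes the algebraic degree of $f$ (degree of its algebraic normal form in $n$ binary coordinates). *)

theory Defs
  imports Main
begin

text \<open>Binary vectors of length n, represented as functions nat \<Rightarrow> bool vanishing from n on.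
  Addition over F_2 is pointwise exclusive or.\<close>
definition bvecs :: "nat \<Rightarrow> (nat \<Rightarrow> bool) set" where
  "bvecs n = {v. \<forall>i\<ge>n. \<not> v i}"

definition F2_coord_iso :: "nat \<Rightarrow> ((nat \<Rightarrow> bool) \<Rightarrow> 'a::ab_group_add \<times> 'a) \<Rightarrow> ('a \<times> 'a) set \<Rightarrow> bool" where
  "F2_coord_iso n \<phi> D \<longleftrightarrow> bij_betw \<phi> (bvecs n) D \<and>
     (\<forall>v\<in>bvecs n. \<forall>w\<in>bvecs n.
        fst (\<phi> (\<lambda>i. v i \<noteq> w i)) = fst (\<phi> v) + fst (\<phi> w) \<and>
        snd (\<phi> (\<lambda>i. v i \<noteq> w i)) = snd (\<phi> v) + snd (\<phi> w))"

definition anf_degree :: "nat \<Rightarrow> ((nat \<Rightarrow> bool) \<Rightarrow> bool) \<Rightarrow> nat" where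
  "anf_degree n g = (LEAST d. \<exists>a :: nat set \<Rightarrow> bool.
      (\<forall>S. S \<subseteq> {..<n} \<and> a S \<longrightarrow> card S \<le> d) \<and>
      (\<forall>v\<in>bvecs n. g v = odd (card {S. S \<subseteq> {..<n} \<and> a S \<and> (\<forall>i\<in>S. v i)})))"

text \<open>Algebraic degree of a Boolean function on an n-dimensional F_2-space D of pairs,
  computed in coordinates w.r.t. a (chosen) F_2-linear isomorphism F_2^n \<rightarrow> D.
  (The ANF degree does not depend on this choice.)\<close>
definition bool_alg_deg :: "nat \<Rightarrow> ('a::ab_group_add \<times> 'a) set \<Rightarrow> ('a \<times> 'a \<Rightarrow> bool) \<Rightarrow> nat" where
  "bool_alg_deg n D f = anf_degree n (f \<circ> (SOME \<phi>. F2_coord_iso n \<phi> D))"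

end

theory Submission
  imports Defs "HOL-Computational_Algebra.Polynomial" "HOL-Library.FuncSet" "HOL-Library.Product_Plus"
begin

section \<open>Characteristic two\<close>

lemma c2_add_self:
  assumes "(1::'b::comm_ring_1) + 1 = 0" shows "x + x = (0::'b)"
proof -
  have "x + x = x * (1 + 1)" by (simp add: algebra_simps)
  thus ?thesis using assms by simp
qed

lemma c2_minus:
  assumes "(1::'b::comm_ring_1) + 1 = 0" shows "- x = (x::'b)"
  using c2_add_self[OF assms, of x] by (simp add: add_eq_0_iff)

lemma c2_diff:
  assumes "(1::'b::comm_ring_1) + 1 = 0" shows "x - y = x + (y::'b)"
  using c2_minus[OF assms, of y] by (metis diff_conv_add_uminus)

lemma c2_of_nat:
  assumes "(1::'b::comm_ring_1) + 1 = 0" shows "(of_nat n :: 'b) = (if even n then 0 else 1)"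
proof (induction n)
  case (Suc n)
  have e: "(of_nat (Suc n)::'b) = 1 + of_nat n" by (rule of_nat_Suc)
  show ?case
  proof (cases "even n")
    case True then show ?thesis using e Suc.IH by simp
  next
    case False then show ?thesis using e Suc.IH assms by simp
  qed
qed simp

lemma c2_frob2:
  assumes "(1::'b::comm_ring_1) + 1 = 0" shows "(a + b) ^ 2 = a ^ 2 + (b ^ 2::'b)"
proof -
  have "(a + b) ^ 2 = a^2 + b^2 + (a*b + a*b)" by (simp add: power2_eq_square algebra_simps)
  thus ?thesis using c2_add_self[OF assms] by simp
qed

lemma c2_frob:
  assumes "(1::'b::comm_ring_1) + 1 = 0" shows "(a + b) ^ (2^t) = a ^ (2^t) + (b ^ (2^t)::'b)"
proof (induction t)
  case 0 then show ?case by simp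
next
  case (Suc t)
  have "(a + b) ^ (2^Suc t) = ((a+b)^(2^t))^2" by (simp add: power_mult[symmetric] mult.commute)
  also have "\<dots> = (a ^ (2^t))^2 + (b^(2^t))^2" using Suc c2_frob2[OF assms] by simp
  also have "\<dots> = a ^ (2^Suc t) + b ^ (2^Suc t)" by (simp add: power_mult[symmetric] mult.commute)
  finally show ?case .
qed

lemma c2_frob_sum:
  assumes "(1::'b::comm_ring_1) + 1 = 0" shows "(\<Sum>l\<in>T. X l) ^ (2^t) = (\<Sum>l\<in>T. (X l :: 'b) ^ (2^t))"
proof (cases "finite T")
  case True then show ?thesis
    by (induction T rule: finite_induct) (auto simp: c2_frob[OF assms] zero_power)
next
  case False
  have "(2::nat)^t > 0" by simp
  then show ?thesis using False by (simp add: zero_power)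
qed

section \<open>Binary weight\<close>

definition bs :: "nat \<Rightarrow> nat set" where "bs n = {t. bit n t}"
definition wt :: "nat \<Rightarrow> nat" where "wt n = card (bs n)"

lemma bs_rec: "bs n = (if odd n then {0} else {}) \<union> Suc ` bs (n div 2)"
proof (rule set_eqI)
  fix t show "t \<in> bs n \<longleftrightarrow> t \<in> (if odd n then {0} else {}) \<union> Suc ` bs (n div 2)"
    by (cases t) (auto simp: bs_def bit_0 bit_Suc)
qed

lemma bs_0[simp]: "bs 0 = {}" by (simp add: bs_def)

lemma bs_le: "t \<in> bs n \<Longrightarrow> 2 ^ t \<le> n"
proof -
  assume "t \<in> bs n"
  hence "odd (n div 2^t)" by (simp add: bs_def bit_iff_odd)
  hence "n div 2^t \<ge> 1" by (cases "n div 2^t") auto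
  hence "2^t * 1 \<le> 2^t * (n div 2^t)" by (intro mult_le_mono2)
  also have "\<dots> \<le> n" by (metis div_mult_mod_eq le_add1 mult.commute)
  finally show ?thesis by simp
qed

lemma bs_less: "n < 2 ^ w \<Longrightarrow> bs n \<subseteq> {..<w}"
proof
  fix t assume "n < 2^w" "t \<in> bs n"
  hence "2^t < (2::nat)^w" using bs_le[of t n] by linarith
  thus "t \<in> {..<w}" by simp
qed

lemma bs_finite[simp]: "finite (bs n)"
  using bs_less[of n n] finite_subset by (metis finite_lessThan less_exp)

lemma bs_sum: "(\<Sum>t\<in>bs n. (2::nat) ^ t) = n"
proof (induction n rule: less_induct)
  case (less n)
  show ?case
  proof (cases "n = 0")
    case False
    have d: "(\<Sum>t\<in>Suc ` bs (n div 2). (2::nat) ^ t) = 2 * (n div 2)"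
      using less[of "n div 2"] False by (simp add: sum.reindex sum_distrib_left[symmetric])
    show ?thesis
    proof (cases "odd n")
      case True
      have "(\<Sum>t\<in>bs n. (2::nat)^t) = 1 + (\<Sum>t\<in>Suc ` bs (n div 2). 2 ^ t)"
        by (subst bs_rec) (simp add: True sum.insert image_iff)
      then show ?thesis using d True by presburger
    next
      case False
      have "(\<Sum>t\<in>bs n. (2::nat)^t) = (\<Sum>t\<in>Suc ` bs (n div 2). 2 ^ t)"
        by (subst bs_rec) (simp add: False)
      then show ?thesis using d False by presburger
    qed
  qed simp
qed

lemma wt_rec: "wt n = n mod 2 + wt (n div 2)"
proof -
  have c: "card (Suc ` bs (n div 2)) = wt (n div 2)" by (simp add: wt_def card_image)
  show ?thesis
  proof (cases "odd n")
    case True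
    have "wt n = card (insert 0 (Suc ` bs (n div 2)))" unfolding wt_def by (subst bs_rec) (simp add: True)
    also have "\<dots> = Suc (wt (n div 2))" using c by (subst card_insert_disjoint) auto
    finally show ?thesis using True by (simp add: odd_iff_mod_2_eq_one)
  next
    case False
    have "wt n = card (Suc ` bs (n div 2))" unfolding wt_def by (subst bs_rec) (simp add: False)
    then show ?thesis using c False by (simp add: even_iff_mod_2_eq_zero)
  qed
qed

lemma wt_0[simp]: "wt 0 = 0" by (simp add: wt_def)

lemma wt_pow2[simp]: "wt (2^t) = 1"
proof (induction t)
  case 0 then show ?case using wt_rec[of 1] by simp
next
  case (Suc t) then show ?case using wt_rec[of "2^Suc t"] by simp
qed

lemma wt_add: "wt (a + b) \<le> wt a + wt b"
proof (induction "a + b" arbitrary: a b rule: less_induct)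
  case less
  show ?case
  proof (cases "a + b = 0")
    case True then show ?thesis by simp
  next
    case False
    define c where "c = (if odd a \<and> odd b then 1 else (0::nat))"
    have dv: "(a+b) div 2 = a div 2 + b div 2 + c" unfolding c_def by presburger
    have md: "(a+b) mod 2 + c \<le> a mod 2 + b mod 2" unfolding c_def by presburger
    have lt1: "a div 2 + b div 2 + c < a + b" using False unfolding c_def by presburger
    have lt2: "a div 2 + b div 2 < a + b" using lt1 by simp
    have "wt (a+b) = (a+b) mod 2 + wt (a div 2 + b div 2 + c)" by (subst wt_rec) (simp add: dv)
    also have "\<dots> \<le> (a+b) mod 2 + wt (a div 2 + b div 2) + wt c"
      using less[OF lt1] by simp
    also have "\<dots> \<le> (a+b) mod 2 + wt (a div 2) + wt (b div 2) + wt c"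
      using less[OF lt2] by simp
    also have "wt c = c" unfolding c_def using wt_pow2[of 0] by simp
    also have "(a+b) mod 2 + wt (a div 2) + wt (b div 2) + c \<le> wt a + wt b"
      using md wt_rec[of a] wt_rec[of b] by simp
    finally show ?thesis by simp
  qed
qed

lemma wt_sum: "wt (\<Sum>i\<in>S. h i) \<le> (\<Sum>i\<in>S. wt (h i))"
proof (cases "finite S")
  case True then show ?thesis
    by (induction S rule: finite_induct) (auto intro: order_trans[OF wt_add])
qed simp

lemma wt_concat: "r < 2 ^ w \<Longrightarrow> wt (q * 2 ^ w + r) = wt q + wt r"
proof (induction w arbitrary: r)
  case 0 then show ?case by simp
next
  case (Suc w)
  have a: "(q * 2 ^ Suc w + r) div 2 = q * 2^w + r div 2" by simp
  have b0: "q * 2 ^ Suc w + r = r + 2 * (q * 2^w)" by simp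
  have b: "(q * 2 ^ Suc w + r) mod 2 = r mod 2" unfolding b0 by simp
  have c: "r div 2 < 2 ^ w" using Suc.prems by simp
  have "wt (q * 2 ^ Suc w + r) = r mod 2 + wt (q * 2^w + r div 2)"
    by (subst wt_rec) (simp only: a b)
  also have "\<dots> = r mod 2 + wt q + wt (r div 2)" using Suc.IH[OF c] by simp
  also have "\<dots> = wt q + wt r" using wt_rec[of r] by simp
  finally show ?case .
qed

lemma wt_mask: "wt (2 ^ w - 1) = w"
proof (induction w)
  case 0 then show ?case by simp
next
  case (Suc w)
  have "(2::nat) ^ Suc w - 1 = 1 * 2^w + (2^w - 1)" by simp
  hence "wt (2 ^ Suc w - 1) = wt 1 + wt (2^w - 1)" using wt_concat[of "2^w - 1" w 1]
    by (metis diff_less pos2 zero_less_one zero_less_power)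
  then show ?case using Suc wt_pow2[of 0] by simp
qed

lemma wt_dvd: "0 < w \<Longrightarrow> (2 ^ w - 1) dvd a \<Longrightarrow> 0 < a \<Longrightarrow> w \<le> wt a"
proof (induction a rule: less_induct)
  case (less a)
  show ?case
  proof (cases "a < 2 ^ w")
    case True
    from less.prems(2) obtain c where c: "a = (2^w - 1) * c" by (auto elim: dvdE)
    have "c \<noteq> 0" using c less.prems(3) by auto
    moreover have "c < 2"
    proof (rule ccontr)
      assume "\<not> c < 2"
      hence "(2^w - 1) * 2 \<le> (2^w - 1) * c" by simp
      moreover have "(2::nat)^w \<ge> 2" using less.prems(1)
        proof -
        have "(2::nat)^1 \<le> 2^w" using less.prems(1) by (intro power_increasing) auto
        thus ?thesis by simp
      qed
      ultimately show False using True c by linarith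
    qed
    ultimately have "a = 2^w - 1" using c by (cases c) auto
    then show ?thesis using wt_mask[of w] by simp
  next
    case False
    define q where "q = a div 2^w"
    define r where "r = a mod 2^w"
    have a: "a = q * 2^w + r" unfolding q_def r_def by (metis div_mult_mod_eq)
    have "q \<ge> 1" using False unfolding q_def by (simp add: Suc_le_eq div_greater_zero_iff)
    have "(2::nat)^w \<ge> 2" using less.prems(1)
      proof -
        have "(2::nat)^1 \<le> 2^w" using less.prems(1) by (intro power_increasing) auto
        thus ?thesis by simp
      qed
    hence lt: "q + r < a" using a \<open>q \<ge> 1\<close> proof -
      have "q * 1 < q * 2^w" using \<open>q \<ge> 1\<close> \<open>(2::nat)^w \<ge> 2\<close> by (intro mult_strict_left_mono) auto
      thus ?thesis using a by simp
    qed
    have qle: "q \<le> q * 2^w" by simp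
    have eq: "a = (q + r) + q * (2^w - 1)" using a qle by (simp add: diff_mult_distrib2)
    have "(2 ^ w - 1) dvd (q + r) + q * (2^w - 1)" using less.prems(2) eq by simp
    hence "(2 ^ w - 1) dvd (q + r)" using dvd_add_times_triv_right_iff[of "2^w - 1" "q + r" q] by (simp add: mult.commute)
    moreover have "0 < q + r" using \<open>q \<ge> 1\<close> by simp
    ultimately have "w \<le> wt (q + r)" using less.IH[OF lt less.prems(1)] by blast
    also have "\<dots> \<le> wt q + wt r" by (rule wt_add)
    also have "\<dots> = wt a" using a wt_concat[of r w q] unfolding r_def by simp
    finally show ?thesis .
  qed
qed

section \<open>Sums over subsets in characteristic two\<close>

lemma pow_insert_sum:
  assumes "x \<notin> S" "finite S"
  shows "(\<Sum>T\<in>Pow (insert x S). H T) = (\<Sum>T\<in>Pow S. H T) + (\<Sum>T\<in>Pow S. H (insert x T))"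
proof -
  have d: "Pow S \<inter> insert x ` Pow S = {}" using assms(1) by auto
  have i: "inj_on (insert x) (Pow S)" using assms(1) unfolding inj_on_def by (metis PowD insert_ident subsetD)
  show ?thesis unfolding Pow_insert using assms(2)
    by (subst sum.union_disjoint) (auto simp: d sum.reindex[OF i])
qed

lemma mobius:
  assumes c2: "(1::'b::comm_ring_1) + 1 = 0" and "finite V"
  shows "(\<Sum>S\<in>Pow V. \<Sum>T\<in>Pow S. h T) = (h V :: 'b)"
  using assms(2)
proof (induction V arbitrary: h rule: finite_induct)
  case empty then show ?case by simp
next
  case (insert x V)
  have fS: "\<And>S. S \<in> Pow V \<Longrightarrow> finite S \<and> x \<notin> S" using insert(1,2) finite_subset by auto
  have "(\<Sum>S\<in>Pow (insert x V). \<Sum>T\<in>Pow S. h T)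
      = (\<Sum>S\<in>Pow V. \<Sum>T\<in>Pow S. h T) + (\<Sum>S\<in>Pow V. \<Sum>T\<in>Pow (insert x S). h T)"
    by (rule pow_insert_sum[OF insert(2,1)])
  also have "(\<Sum>S\<in>Pow V. \<Sum>T\<in>Pow (insert x S). h T)
      = (\<Sum>S\<in>Pow V. (\<Sum>T\<in>Pow S. h T) + (\<Sum>T\<in>Pow S. h (insert x T)))"
    by (rule sum.cong[OF refl], rule pow_insert_sum) (use fS in auto)
  also have "(\<Sum>S\<in>Pow V. \<Sum>T\<in>Pow S. h T) + \<dots> = (\<Sum>S\<in>Pow V. \<Sum>T\<in>Pow S. h T) + (\<Sum>S\<in>Pow V. \<Sum>T\<in>Pow S. h T)
       + (\<Sum>S\<in>Pow V. \<Sum>T\<in>Pow S. h (insert x T))"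
    by (simp add: sum.distrib add.assoc)
  also have "\<dots> = (\<Sum>S\<in>Pow V. \<Sum>T\<in>Pow S. h (insert x T))" by (simp add: c2_add_self[OF c2])
  also have "\<dots> = h (insert x V)" by (rule insert.IH)
  finally show ?case .
qed

lemma lin_prod_sum:
  assumes c2: "(1::'b::comm_ring_1) + 1 = 0"
  shows "finite A \<Longrightarrow> finite S \<Longrightarrow> card A < card S \<Longrightarrow>
    (\<Sum>T\<in>Pow S. \<Prod>a\<in>A. \<Sum>l\<in>T. c a l) = (0::'b)"
proof (induction "card A" arbitrary: A S rule: less_induct)
  case less
  obtain l0 where l0: "l0 \<in> S" using less.prems(3) by (metis card.empty ex_in_conv not_less0)
  define S' where "S' = S - {l0}"
  have S: "S = insert l0 S'" and l0S': "l0 \<notin> S'" and fS': "finite S'"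
    using l0 less.prems(2) unfolding S'_def by auto
  have cS': "card A \<le> card S'" using less.prems(3) S l0S' fS' by simp
  define L where "L T a = (\<Sum>l\<in>T. c a l)" for T a
  have fT: "\<And>T. T \<in> Pow S' \<Longrightarrow> finite T \<and> l0 \<notin> T" using fS' l0S' finite_subset by auto
  have step: "(\<Prod>a\<in>A. L (insert l0 T) a) = (\<Prod>a\<in>A. L T a)
      + (\<Sum>B\<in>Pow A - {A}. (\<Prod>a\<in>B. L T a) * (\<Prod>a\<in>A - B. c a l0))" if "T \<in> Pow S'" for T
  proof -
    have "(\<Prod>a\<in>A. L (insert l0 T) a) = (\<Prod>a\<in>A. L T a + c a l0)"
      using fT[OF that] unfolding L_def by (simp add: add.commute)
    also have "\<dots> = (\<Sum>B\<in>Pow A. (\<Prod>a\<in>B. L T a) * (\<Prod>a\<in>A - B. c a l0))"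
      by (rule prod_add[OF less.prems(1)])
    also have "\<dots> = (\<Prod>a\<in>A. L T a) * (\<Prod>a\<in>A - A. c a l0)
       + (\<Sum>B\<in>Pow A - {A}. (\<Prod>a\<in>B. L T a) * (\<Prod>a\<in>A - B. c a l0))"
      using less.prems(1) by (subst sum.remove[of _ A]) auto
    finally show ?thesis by simp
  qed
  have inner: "(\<Sum>T\<in>Pow S'. \<Prod>a\<in>B. L T a) = 0" if "B \<in> Pow A - {A}" for B
  proof -
    have "B \<subset> A" using that by auto
    hence "card B < card A" using less.prems(1) by (simp add: psubset_card_mono)
    moreover have "finite B" using \<open>B \<subset> A\<close> less.prems(1) finite_subset by auto
    ultimately show ?thesis unfolding L_def using less.hyps[of B S'] fS' cS' by simp
  qed
  have "(\<Sum>T\<in>Pow S. \<Prod>a\<in>A. L T a) = (\<Sum>T\<in>Pow S'. \<Prod>a\<in>A. L T a) + (\<Sum>T\<in>Pow S'. \<Prod>a\<in>A. L (insert l0 T) a)"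
    unfolding S by (rule pow_insert_sum[OF l0S' fS'])
  also have "(\<Sum>T\<in>Pow S'. \<Prod>a\<in>A. L (insert l0 T) a) = (\<Sum>T\<in>Pow S'. \<Prod>a\<in>A. L T a)
      + (\<Sum>T\<in>Pow S'. \<Sum>B\<in>Pow A - {A}. (\<Prod>a\<in>B. L T a) * (\<Prod>a\<in>A - B. c a l0))"
    by (simp add: step sum.distrib)
  also have "(\<Sum>T\<in>Pow S'. \<Sum>B\<in>Pow A - {A}. (\<Prod>a\<in>B. L T a) * (\<Prod>a\<in>A - B. c a l0))
      = (\<Sum>B\<in>Pow A - {A}. (\<Sum>T\<in>Pow S'. \<Prod>a\<in>B. L T a) * (\<Prod>a\<in>A - B. c a l0))"
    by (subst sum.swap) (simp add: sum_distrib_right)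
  also have "\<dots> = 0" by (simp add: inner)
  finally show ?case unfolding L_def by (simp add: c2_add_self[OF c2])
qed

section \<open>Binary vectors and bases\<close>

lemma bvecs_image: "bvecs k = (\<lambda>T i. i \<in> T) ` Pow {..<k}"
proof (rule set_eqI)
  fix v
  show "v \<in> bvecs k \<longleftrightarrow> v \<in> (\<lambda>T i. i \<in> T) ` Pow {..<k}"
  proof
    assume "v \<in> bvecs k"
    hence "{i. v i} \<in> Pow {..<k}" "v = (\<lambda>i. i \<in> {i. v i})" unfolding bvecs_def by (auto simp: not_le[symmetric])
    thus "v \<in> (\<lambda>T i. i \<in> T) ` Pow {..<k}" by blast
  qed (auto simp: bvecs_def)
qed

lemma bvecs_card: "card (bvecs k) = 2 ^ k" and bvecs_finite[simp]: "finite (bvecs k)"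
proof -
  have i: "inj_on (\<lambda>T i. i \<in> T) (Pow {..<k})" unfolding inj_on_def by (auto simp: fun_eq_iff)
  show "card (bvecs k) = 2 ^ k" unfolding bvecs_image by (simp add: card_image[OF i] card_Pow)
  show "finite (bvecs k)" unfolding bvecs_image by simp
qed

definition lsum :: "nat \<Rightarrow> (nat \<Rightarrow> 'b::ab_group_add) \<Rightarrow> (nat \<Rightarrow> bool) \<Rightarrow> 'b" where
  "lsum k b v = (\<Sum>t<k. if v t then b t else 0)"

lemma lsum_xor:
  assumes "\<forall>x::'b::ab_group_add. x + x = 0"
  shows "lsum k (b :: nat \<Rightarrow> 'b) (\<lambda>i. v i \<noteq> w i) = lsum k b v + lsum k b (w :: nat \<Rightarrow> bool)"
  unfolding lsum_def sum.distrib[symmetric] by (rule sum.cong) (auto simp: assms[rule_format])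

lemma lsum_in:
  assumes "0 \<in> G" "\<forall>x\<in>G. \<forall>y\<in>G. x + y \<in> G" "\<forall>t<k. b t \<in> G"
  shows "lsum k b v \<in> G"
  unfolding lsum_def using assms(3)
proof (induction k)
  case 0 then show ?case using assms by simp
next
  case (Suc k) then show ?case using assms by (auto simp: lessThan_Suc)
qed

lemma greedy:
  fixes G :: "'b::ab_group_add set"
  assumes c2: "\<forall>x::'b. x + x = 0" and z: "0 \<in> G" and cl: "\<forall>x\<in>G. \<forall>y\<in>G. x + y \<in> G"
    and fin: "finite G" and cG: "card G = 2 ^ k"
  shows "\<exists>b. (\<forall>t<k. b t \<in> G) \<and> bij_betw (lsum k b) (bvecs k) G"
proof -
  have "\<exists>b. (\<forall>t<j. b t \<in> G) \<and> inj_on (lsum j b) (bvecs j)" if "j \<le> k" for j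
    using that
  proof (induction j)
    case 0
    have "bvecs 0 = {\<lambda>_. False}" unfolding bvecs_def by auto
    then show ?case by auto
  next
    case (Suc j)
    then obtain b where bG: "\<forall>t<j. b t \<in> G" and inj: "inj_on (lsum j b) (bvecs j)" by auto
    have sub: "lsum j b ` bvecs j \<subseteq> G" using lsum_in[OF z cl] bG by auto
    have "card (lsum j b ` bvecs j) = 2 ^ j" using card_image[OF inj] bvecs_card by simp
    also have "\<dots> < 2 ^ k" using Suc.prems by simp
    finally have cI: "card (lsum j b ` bvecs j) < card G" using cG by simp
    have "G - lsum j b ` bvecs j \<noteq> {}"
    proof
      assume "G - lsum j b ` bvecs j = {}"
      hence "G \<subseteq> lsum j b ` bvecs j" by auto
      hence "card G \<le> card (lsum j b ` bvecs j)" by (intro card_mono) auto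
      thus False using cI by simp
    qed
    then obtain g where g: "g \<in> G" "g \<notin> lsum j b ` bvecs j" by auto
    define b' where "b' = b(j := g)"
    have b'G: "\<forall>t<Suc j. b' t \<in> G" using bG g unfolding b'_def by (auto simp: less_Suc_eq)
    have dec: "lsum (Suc j) b' v = lsum j b (v(j := False)) + (if v j then g else 0)" for v
    proof -
      have "(\<Sum>t<j. if v t then b' t else 0) = (\<Sum>t<j. if (v(j:=False)) t then b t else 0)"
        by (rule sum.cong) (auto simp: b'_def)
      thus ?thesis unfolding lsum_def by (simp add: b'_def)
    qed
    have res: "v(j := False) \<in> bvecs j" if "v \<in> bvecs (Suc j)" for v
      using that unfolding bvecs_def by (auto simp: Suc_le_eq)
    have "inj_on (lsum (Suc j) b') (bvecs (Suc j))"
    proof (rule inj_onI)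
      fix v w assume v: "v \<in> bvecs (Suc j)" and w: "w \<in> bvecs (Suc j)"
        and eq: "lsum (Suc j) b' v = lsum (Suc j) b' w"
      show "v = w"
      proof (cases "v j = w j")
        case True
        hence "lsum j b (v(j := False)) = lsum j b (w(j := False))" using eq dec[of v] dec[of w] by simp
        hence "v(j := False) = w(j := False)" using inj res[OF v] res[OF w] by (meson inj_onD)
        show ?thesis
        proof (rule ext)
          fix i show "v i = w i" using fun_cong[OF \<open>v(j := False) = w(j := False)\<close>, of i] True by (cases "i = j") auto
        qed
      next
        case False
        have m: "\<And>x::'b. - x = x" using c2 by (metis add_eq_0_iff)
        have "g = lsum j b (v(j := False)) + lsum j b (w(j := False))"
          using eq dec[of v] dec[of w] False
        proof -
          have key: "\<And>A B x::'b. A + x = B \<Longrightarrow> x = A + B"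
            using c2 by (metis add.assoc add_0_left)
          show ?thesis
          proof (cases "v j")
            case True
            hence "lsum j b (v(j := False)) + g = lsum j b (w(j := False))" using eq dec[of v] dec[of w] False by simp
            then show ?thesis by (rule key)
          next
            case F: False
            hence "lsum j b (w(j := False)) + g = lsum j b (v(j := False))" using eq dec[of v] dec[of w] False by simp
            hence "g = lsum j b (w(j := False)) + lsum j b (v(j := False))" by (rule key)
            then show ?thesis by (simp add: add.commute)
          qed
        qed
        also have "\<dots> = lsum j b (\<lambda>i. (v(j := False)) i \<noteq> (w(j := False)) i)" by (rule lsum_xor[OF c2, symmetric])
        finally have geq: "g = lsum j b (\<lambda>i. (v(j := False)) i \<noteq> (w(j := False)) i)" .
        have xb: "(\<lambda>i. (v(j := False)) i \<noteq> (w(j := False)) i) \<in> bvecs j"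
          using res[OF v] res[OF w] unfolding bvecs_def by simp
        have "g \<in> lsum j b ` bvecs j" using geq xb by (rule image_eqI)
        then show ?thesis using g by simp
      qed
    qed
    then show ?case using b'G by blast
  qed
  then obtain b where bG: "\<forall>t<k. b t \<in> G" and inj: "inj_on (lsum k b) (bvecs k)" by blast
  have sub: "lsum k b ` bvecs k \<subseteq> G" using lsum_in[OF z cl] bG by auto
  have "card (lsum k b ` bvecs k) = card G" using card_image[OF inj] bvecs_card cG by simp
  hence "lsum k b ` bvecs k = G" using card_subset_eq[OF fin sub] by simp
  thus ?thesis using bG inj unfolding bij_betw_def by blast
qed

lemma nat_pow_minus1_dvd: "(x::nat) \<ge> 1 \<Longrightarrow> (x - 1) dvd (x ^ r - 1)"
proof (induction r)
  case 0 then show ?case by simp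
next
  case (Suc r)
  have eq: "x ^ Suc r - 1 = x * (x ^ r - 1) + (x - 1)"
    using Suc.prems by (simp add: algebra_simps diff_mult_distrib2)
  have "(x - 1) dvd x * (x ^ r - 1) + (x - 1)"
    by (rule dvd_add[OF dvd_mult[OF Suc.IH[OF Suc.prems]] dvd_refl])
  then show ?case unfolding eq .
qed

lemma cyc_sum:
  fixes g :: "'a::field"
  assumes "g ^ d = 1"
  shows "(\<Sum>j<d. (g ^ j) ^ e) = (if g ^ e = 1 then of_nat d else 0)"
proof (cases "g ^ e = 1")
  case True
  have "(g ^ j) ^ e = 1" for j
  proof -
    have "(g ^ j) ^ e = (g ^ e) ^ j" by (simp add: power_mult[symmetric] mult.commute)
    thus ?thesis using True by simp
  qed
  then show ?thesis using True by simp
next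
  case False
  have "(\<Sum>j<d. (g ^ j) ^ e) = (\<Sum>j<d. (g ^ e) ^ j)" by (simp add: power_mult[symmetric] mult.commute)
  also have "\<dots> = ((g^e)^d - 1) / (g^e - 1)" by (rule geometric_sum[OF False])
  also have "(g^e)^d = 1"
  proof -
    have "(g ^ e) ^ d = (g ^ d) ^ e" by (simp add: power_mult[symmetric] mult.commute)
    thus ?thesis using assms by simp
  qed
  finally show ?thesis using False by simp
qed

locale ff =
  fixes \<alpha> :: "'a::{field,finite}" and r m :: nat
  assumes card: "card (UNIV :: 'a set) = 2 ^ (r * m)"
    and r_pos: "r \<ge> 1" and m_ge: "m \<ge> 3"
    and primitive: "\<forall>z::'a. z \<noteq> 0 \<longrightarrow> (\<exists>k::nat. z = \<alpha> ^ k)"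
begin

abbreviation "N \<equiv> (2::nat) ^ (r * m)"
abbreviation "M \<equiv> (2::nat) ^ m - 1"

lemma rm_ge: "r * m \<ge> 3" using r_pos m_ge by (metis le_trans mult_le_mono1 mult_1)

lemma N_ge: "N \<ge> 8"
proof -
  have "(2::nat)^3 \<le> 2^(r*m)" using rm_ge by (intro power_increasing) auto
  thus ?thesis by simp
qed

lemma N_odd: "odd (N - 1)"
proof -
  have "even N" using r_pos m_ge by simp
  thus ?thesis using N_ge by presburger
qed

lemma M_odd: "odd M"
proof -
  have "even ((2::nat)^m)" using m_ge by simp
  moreover have "(2::nat)^m \<ge> 1" by simp
  ultimately show ?thesis by presburger
qed

lemma M_ge: "M \<ge> 7"
proof -
  have "(2::nat)^3 \<le> 2^m" using m_ge by (intro power_increasing) auto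
  thus ?thesis by simp
qed

lemma alpha_nz: "\<alpha> \<noteq> 0"
proof
  assume a: "\<alpha> = 0"
  have "\<not> UNIV \<subseteq> {0, 1::'a}"
  proof
    assume "UNIV \<subseteq> {0, 1::'a}"
    hence "card (UNIV::'a set) \<le> card {0, 1::'a}" by (intro card_mono) auto
    also have "\<dots> \<le> 2" by (simp add: card_insert_le_m1)
    finally show False using card N_ge by simp
  qed
  then obtain z :: 'a where z: "z \<noteq> 0" "z \<noteq> 1" by auto
  then obtain k where "z = \<alpha> ^ k" using primitive by auto
  then show False using z a by (cases k) auto
qed

lemma exists_period: "\<exists>d>0. \<alpha> ^ d = 1"
proof -
  have "\<not> inj (\<lambda>k::nat. \<alpha> ^ k)"
  proof
    assume "inj (\<lambda>k::nat. \<alpha> ^ k)"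
    hence "finite (UNIV :: nat set)" using finite_imageD[of "\<lambda>k::nat. \<alpha>^k" UNIV] by simp
    thus False by simp
  qed
  then obtain a b where ab: "\<alpha> ^ a = \<alpha> ^ b" "a \<noteq> b" unfolding inj_def by auto
  show ?thesis
  proof (cases "a < b")
    case True
    have "\<alpha> ^ b = \<alpha> ^ a * \<alpha> ^ (b - a)" using True by (simp add: power_add[symmetric])
    hence "\<alpha> ^ a * \<alpha> ^ (b - a) = \<alpha> ^ a * 1" using ab by simp
    hence "\<alpha> ^ (b - a) = 1" using alpha_nz by simp
    then show ?thesis using True by (intro exI[of _ "b - a"]) auto
  next
    case False
    hence "b < a" using ab by simp
    have "\<alpha> ^ a = \<alpha> ^ b * \<alpha> ^ (a - b)" using \<open>b < a\<close> by (simp add: power_add[symmetric])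
    hence "\<alpha> ^ b * \<alpha> ^ (a - b) = \<alpha> ^ b * 1" using ab by simp
    hence "\<alpha> ^ (a - b) = 1" using alpha_nz by simp
    then show ?thesis using \<open>b < a\<close> by (intro exI[of _ "a - b"]) auto
  qed
qed

definition "ordA = (LEAST d. d > 0 \<and> \<alpha> ^ d = 1)"

lemma ordA: "ordA > 0" "\<alpha> ^ ordA = 1"
  using LeastI_ex[OF exists_period] unfolding ordA_def by auto

lemma ordA_min: "0 < d \<Longrightarrow> d < ordA \<Longrightarrow> \<alpha> ^ d \<noteq> 1"
  unfolding ordA_def using not_less_Least by blast

lemma pow_mod: "\<alpha> ^ k = \<alpha> ^ (k mod ordA)"
proof -
  have "\<alpha> ^ k = \<alpha> ^ (k div ordA * ordA + k mod ordA)" by simp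
  also have "\<dots> = \<alpha> ^ (k div ordA * ordA) * \<alpha> ^ (k mod ordA)" by (rule power_add)
  also have "\<alpha> ^ (k div ordA * ordA) = (\<alpha> ^ ordA) ^ (k div ordA)" by (subst mult.commute) (rule power_mult)
  finally show ?thesis using ordA by simp
qed

lemma inj_ord: "inj_on (\<lambda>k. \<alpha> ^ k) {..<ordA}"
proof (rule inj_onI)
  have gen: "a = b" if "a < b" "b < ordA" "\<alpha> ^ a = \<alpha> ^ b" for a b
  proof -
    have "\<alpha> ^ b = \<alpha> ^ a * \<alpha> ^ (b - a)" using that(1) by (simp add: power_add[symmetric])
    hence "\<alpha> ^ a * \<alpha> ^ (b - a) = \<alpha> ^ a * 1" using that(3) by simp
    hence "\<alpha> ^ (b - a) = 1" using alpha_nz by simp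
    thus ?thesis using ordA_min[of "b - a"] that by simp
  qed
  fix a b assume "a \<in> {..<ordA}" "b \<in> {..<ordA}" "\<alpha> ^ a = \<alpha> ^ b"
  thus "a = b" using gen[of a b] gen[of b a] by (cases a b rule: linorder_cases) auto
qed

lemma nonzero_image: "UNIV - {0} = (\<lambda>k. \<alpha> ^ k) ` {..<ordA}"
proof
  show "UNIV - {0} \<subseteq> (\<lambda>k. \<alpha> ^ k) ` {..<ordA}"
  proof
    fix z :: 'a assume "z \<in> UNIV - {0}"
    then obtain k where "z = \<alpha> ^ k" using primitive by auto
    hence "z = \<alpha> ^ (k mod ordA)" using pow_mod by simp
    moreover have "k mod ordA < ordA" using ordA by simp
    ultimately show "z \<in> (\<lambda>k. \<alpha> ^ k) ` {..<ordA}" by auto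
  qed
  show "(\<lambda>k. \<alpha> ^ k) ` {..<ordA} \<subseteq> UNIV - {0}" using alpha_nz by auto
qed

lemma ordA_eq: "ordA = N - 1"
proof -
  have "card (UNIV - {0::'a}) = N - 1" using card by (simp add: card_Diff_singleton)
  moreover have "card (UNIV - {0::'a}) = ordA" using nonzero_image card_image[OF inj_ord] by simp
  ultimately show ?thesis by simp
qed

lemma alpha_pow_eq_iff: "\<alpha> ^ a = \<alpha> ^ b \<longleftrightarrow> a mod (N - 1) = b mod (N - 1)"
proof
  assume "\<alpha> ^ a = \<alpha> ^ b"
  hence "\<alpha> ^ (a mod ordA) = \<alpha> ^ (b mod ordA)" using pow_mod[of a] pow_mod[of b] by simp
  moreover have "a mod ordA < ordA" "b mod ordA < ordA" using ordA by auto
  ultimately have "a mod ordA = b mod ordA" using inj_ord by (auto dest: inj_onD)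
  thus "a mod (N - 1) = b mod (N - 1)" using ordA_eq by simp
next
  assume "a mod (N - 1) = b mod (N - 1)"
  thus "\<alpha> ^ a = \<alpha> ^ b" using pow_mod[of a] pow_mod[of b] ordA_eq by simp
qed

lemma alpha_pow_one_iff: "\<alpha> ^ a = 1 \<longleftrightarrow> (N - 1) dvd a"
  using alpha_pow_eq_iff[of a 0] by (simp add: mod_eq_0_iff_dvd)

lemma pow_N1: "(z::'a) \<noteq> 0 \<Longrightarrow> z ^ (N - 1) = 1"
proof -
  assume "z \<noteq> 0"
  then obtain k where "z = \<alpha> ^ k" using primitive by auto
  hence "z ^ (N - 1) = (\<alpha> ^ (N - 1)) ^ k" by (simp add: power_mult[symmetric] mult.commute)
  thus ?thesis using alpha_pow_one_iff[of "N - 1"] by simp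
qed

lemma pow_N: "z ^ N = (z::'a)"
proof (cases "z = 0")
  case False
  have "N = Suc (N - 1)" using N_ge by simp
  hence "z ^ N = z ^ (N - 1) * z" by (metis power_Suc2)
  then show ?thesis using pow_N1[OF False] by simp
qed simp

lemma char2: "(1::'a) + 1 = 0"
proof -
  have "(-1::'a) ^ (N - 1) = 1" by (rule pow_N1) simp
  moreover have "odd (N - 1)" using N_odd .
  ultimately have "(-1::'a) = 1" by simp
  hence "(1::'a) + 1 = 1 + -1" by simp
  thus ?thesis by simp
qed

lemma M_dvd: "M dvd (N - 1)"
  using nat_pow_minus1_dvd[of "2^m" r] by (simp add: power_mult[symmetric] mult.commute)

definition "Q = (N - 1) div M"
lemma MQ: "M * Q = N - 1" unfolding Q_def using M_dvd by simp

definition "K = {y::'a. y ^ (2 ^ m) = y}"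

lemma K_nz_iff: "y \<noteq> 0 \<Longrightarrow> y \<in> K \<longleftrightarrow> y ^ M = 1"
proof -
  assume y: "y \<noteq> 0"
  have "(2::nat) ^ m = Suc M" by simp
  hence "y ^ (2^m) = y ^ M * y" by (metis power_Suc2)
  thus ?thesis unfolding K_def using y by auto
qed

definition "\<beta> = \<alpha> ^ Q"

lemma beta_pow_eq_iff: "\<beta> ^ a = \<beta> ^ b \<longleftrightarrow> a mod M = b mod M"
proof -
  have "\<beta> ^ a = \<beta> ^ b \<longleftrightarrow> (Q * a) mod (M * Q) = (Q * b) mod (M * Q)"
    unfolding \<beta>_def power_mult[symmetric] alpha_pow_eq_iff MQ by simp
  also have "\<dots> \<longleftrightarrow> a mod M = b mod M"
  proof -
    have "Q > 0" using MQ N_ge by (cases "Q = 0") auto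
    thus ?thesis by (simp add: mult.commute[of M Q])
  qed
  finally show ?thesis .
qed

lemma beta_M: "\<beta> ^ M = 1" using beta_pow_eq_iff[of M 0] by simp

lemma K_nonzero_image: "K - {0} = (\<lambda>j. \<beta> ^ j) ` {..<M}"
proof
  show "K - {0} \<subseteq> (\<lambda>j. \<beta> ^ j) ` {..<M}"
  proof
    fix y assume y: "y \<in> K - {0}"
    then obtain k where k: "y = \<alpha> ^ k" using primitive by auto
    have "y ^ M = 1" using y K_nz_iff by auto
    hence "\<alpha> ^ (k * M) = 1" using k by (simp add: power_mult)
    hence "(M * Q) dvd (k * M)" using alpha_pow_one_iff MQ by simp
    moreover have "(2::nat)^m > 1" using M_ge by arith
    ultimately have "Q dvd k" by (simp add: mult.commute[of k])
    then obtain j where j: "k = Q * j" by (auto elim: dvdE)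
    hence "y = \<beta> ^ j" unfolding \<beta>_def k by (simp add: power_mult)
    also have "\<dots> = \<beta> ^ (j mod M)" using beta_pow_eq_iff by simp
    finally show "y \<in> (\<lambda>j. \<beta> ^ j) ` {..<M}" using M_ge by auto
  qed
  show "(\<lambda>j. \<beta> ^ j) ` {..<M} \<subseteq> K - {0}"
  proof
    fix y assume "y \<in> (\<lambda>j. \<beta> ^ j) ` {..<M}"
    then obtain j where y: "y = \<beta> ^ j" by auto
    have nz: "y \<noteq> 0" using y alpha_nz unfolding \<beta>_def by simp
    have "y ^ M = (\<beta> ^ M) ^ j" using y by (simp add: power_mult[symmetric] mult.commute)
    thus "y \<in> K - {0}" using K_nz_iff[OF nz] beta_M nz by simp
  qed
qed

lemma inj_beta: "inj_on (\<lambda>j. \<beta> ^ j) {..<M}"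
  by (rule inj_onI) (simp add: beta_pow_eq_iff)

lemma zero_K: "0 \<in> K" unfolding K_def by simp

lemma card_K: "card K = 2 ^ m"
proof -
  have "card (K - {0}) = M" using K_nonzero_image card_image[OF inj_beta] by simp
  moreover have "card K > 0" using zero_K by (auto simp: card_gt_0_iff)
  moreover have "(2::nat)^m \<ge> 1" by simp
  ultimately show ?thesis using card_Diff_singleton[OF zero_K] by arith
qed

lemma K_add: "x \<in> K \<Longrightarrow> y \<in> K \<Longrightarrow> x + y \<in> K"
  unfolding K_def by (simp add: c2_frob[OF char2])

lemma sum_F: "e > 0 \<Longrightarrow> (\<Sum>x\<in>(UNIV::'a set). x ^ e) = (if (N - 1) dvd e then 1 else 0)"
proof -
  assume e: "e > 0"
  have "(\<Sum>x\<in>(UNIV::'a set). x ^ e) = (\<Sum>x\<in>UNIV - {0}. x ^ e)"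
    using e by (intro sum.mono_neutral_right) auto
  also have "\<dots> = (\<Sum>j<ordA. (\<alpha> ^ j) ^ e)" unfolding nonzero_image by (rule sum.reindex[OF inj_ord, unfolded o_def])
  also have "\<dots> = (if \<alpha> ^ e = 1 then of_nat (N - 1) else 0)" using cyc_sum[OF ordA(2)] ordA_eq by simp
  also have "(of_nat (N - 1) :: 'a) = 1"
  proof -
    have h: "(of_nat (N - 1)::'a) = (if even (N - 1) then 0 else 1)" by (rule c2_of_nat[OF char2])
    show ?thesis using N_odd by (simp only: h if_False)
  qed
  finally show ?thesis using alpha_pow_one_iff by simp
qed

lemma sum_K: "e > 0 \<Longrightarrow> (\<Sum>y\<in>K. y ^ e) = (if M dvd e then 1 else 0)"
proof -
  assume e: "e > 0"
  have "(\<Sum>y\<in>K. y ^ e) = (\<Sum>y\<in>K - {0}. y ^ e)"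
    using e by (intro sum.mono_neutral_right) auto
  also have "\<dots> = (\<Sum>j<M. (\<beta> ^ j) ^ e)" unfolding K_nonzero_image by (rule sum.reindex[OF inj_beta, unfolded o_def])
  also have "\<dots> = (if \<beta> ^ e = 1 then of_nat M else 0)" using cyc_sum[OF beta_M] by simp
  also have "(of_nat M :: 'a) = 1"
  proof -
    have h: "(of_nat M::'a) = (if even M then 0 else 1)" by (rule c2_of_nat[OF char2])
    show ?thesis using M_odd by (simp only: h if_False)
  qed
  finally show ?thesis using beta_pow_eq_iff[of e 0] by (simp add: mod_eq_0_iff_dvd)
qed

end

lemma sum_lessThan_add: fixes a c :: nat shows "(\<Sum>t<a + c. f t) = (\<Sum>t<a. f t) + (\<Sum>t<c. f (a + t))"
  by (induction c) (simp_all add: add.assoc)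

lemma geom_c2:
  assumes c2: "(1::'b::comm_ring_1) + 1 = 0"
  shows "(1 + b) ^ (2 ^ e - 1) = (\<Sum>t<2 ^ e. (b::'b) ^ t)"
proof (induction e)
  case 0 then show ?case by simp
next
  case (Suc e)
  have e: "(2::nat) ^ Suc e - 1 = (2 ^ e - 1) + 2 ^ e" by simp
  have "(1 + b) ^ (2 ^ Suc e - 1) = (1 + b) ^ (2 ^ e - 1) * (1 + b) ^ (2 ^ e)"
    unfolding e by (rule power_add)
  also have "\<dots> = (\<Sum>t<2 ^ e. b ^ t) * (1 + b ^ (2 ^ e))" using Suc c2_frob[OF c2, of 1 b e] by simp
  also have "\<dots> = (\<Sum>t<2 ^ e. b ^ t) + (\<Sum>t<2 ^ e. b ^ t) * b ^ (2 ^ e)"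
    by (simp add: algebra_simps)
  also have "\<dots> = (\<Sum>t<2 ^ e. b ^ t) + (\<Sum>t<2 ^ e. b ^ (2 ^ e + t))"
    unfolding sum_distrib_right by (simp add: power_add mult.commute)
  also have "\<dots> = (\<Sum>t<2 ^ e + 2 ^ e. b ^ t)" by (rule sum_lessThan_add[symmetric])
  finally show ?case by (simp add: mult_2)
qed

locale ffs = ff \<alpha> r m for \<alpha> :: "'a::{field,finite}" and r m +
  fixes s :: nat and u :: int
begin

abbreviation "L \<equiv> (2::nat) ^ (r * m - 1)"

lemma L_facts: "2 * L = N" "even L" "L < N - 1" "L \<ge> 1"
proof -
  have rm: "r * m = Suc (r * m - 1)" using rm_ge by simp
  show "2 * L = N" by (subst (2) rm) simp
  show "even L" using rm_ge by simp
  show "L < N - 1" using \<open>2 * L = N\<close> N_ge by simp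
  show "L \<ge> 1" by simp
qed

definition "cf i = inverse (\<alpha> ^ (i * s)) * (1 + inverse (\<alpha> ^ i)) ^ (L - 1)"

definition "Delta = {\<gamma>. \<exists>i. s \<le> i \<and> i \<le> s + L - 1 \<and> \<gamma> = \<alpha> ^ i}"

lemma cf_expand: "cf i = (\<Sum>t<L. (inverse (\<alpha> ^ (s + t))) ^ i)"
proof -
  have "cf i = inverse (\<alpha> ^ (i * s)) * (\<Sum>t<L. (inverse (\<alpha> ^ i)) ^ t)"
    unfolding cf_def by (subst geom_c2[OF char2]) (rule refl)
  also have "\<dots> = (\<Sum>t<L. (inverse (\<alpha> ^ (s + t))) ^ i)"
    unfolding sum_distrib_left
    by (rule sum.cong) (simp_all add: power_inverse[symmetric] power_mult[symmetric] power_add[symmetric] algebra_simps)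
  finally show ?thesis .
qed

lemma G_sum: "(\<Sum>i\<in>{1..N-2}. w ^ i) = (if w = 0 \<or> w = 1 then 0 else (1::'a))"
proof -
  have split: "(\<Sum>i<N-1. w ^ i) = 1 + (\<Sum>i\<in>{1..N-2}. w ^ i)"
  proof -
    have "{..<N-1} = insert 0 {1..N-2}" using N_ge by auto
    thus ?thesis by simp
  qed
  show ?thesis
  proof (cases "w = 0")
    case True
    have "(\<Sum>i\<in>{1..N-2}. w ^ i) = 0" by (rule sum.neutral) (auto simp: True)
    then show ?thesis using True by simp
  next
    case w0: False
    show ?thesis
    proof (cases "w = 1")
      case True
      have "(\<Sum>i\<in>{1..N-2}. w ^ i) = of_nat (N - 2)" using True by simp
      also have "(of_nat (N - 2)::'a) = 0"
      proof -
        have h: "(of_nat (N - 2)::'a) = (if even (N - 2) then 0 else 1)" by (rule c2_of_nat[OF char2])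
        have "even (N - 2)" using N_odd N_ge by presburger
        thus ?thesis by (simp only: h if_True)
      qed
      finally show ?thesis using True by simp
    next
      case False
      have "(\<Sum>i<N-1. w ^ i) = (w ^ (N - 1) - 1) / (w - 1)" by (rule geometric_sum[OF False])
      also have "\<dots> = 0" using pow_N1[OF w0] by simp
      finally have "1 + (\<Sum>i\<in>{1..N-2}. w ^ i) = 0" using split by simp
      hence "(\<Sum>i\<in>{1..N-2}. w ^ i) = - 1" by (simp add: eq_neg_iff_add_eq_0 add.commute)
      then show ?thesis using w0 False c2_minus[OF char2, of 1] by simp
    qed
  qed
qed

lemma Delta_count:
  assumes "z \<noteq> 0"
  shows "(\<Sum>t<L. (if z = \<alpha> ^ (s + t) then 1 else 0)) = (if z \<in> Delta then 1 else (0::'a))"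
proof (cases "\<exists>t<L. z = \<alpha> ^ (s + t)")
  case True
  then obtain t0 where t0: "t0 < L" "z = \<alpha> ^ (s + t0)" by auto
  have uniq: "t = t0" if "t < L" "z = \<alpha> ^ (s + t)" for t
  proof -
    have eq: "(s + t) mod (N - 1) = (s + t0) mod (N - 1)" using that t0 alpha_pow_eq_iff by simp
    have lt: "t < N - 1" "t0 < N - 1" using that t0 L_facts by auto
    show ?thesis
    proof (rule ccontr)
      assume ne: "t \<noteq> t0"
      show False
      proof (cases "t < t0")
        case True
        hence "(N - 1) dvd (s + t0) - (s + t)" using eq by (subst mod_eq_dvd_iff_nat[symmetric]) auto
        hence "(N - 1) dvd (t0 - t)" by simp
        moreover have "t0 - t < N - 1" using lt by arith
        ultimately show False using True nat_dvd_not_less[of "t0 - t" "N - 1"] by simp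
      next
        case False
        hence "t0 < t" using ne by simp
        hence "(N - 1) dvd (s + t) - (s + t0)" using eq by (subst mod_eq_dvd_iff_nat[symmetric]) auto
        hence "(N - 1) dvd (t - t0)" by simp
        moreover have "t - t0 < N - 1" using lt by arith
        ultimately show False using \<open>t0 < t\<close> nat_dvd_not_less[of "t - t0" "N - 1"] by simp
      qed
    qed
  qed
  have "(\<Sum>t<L. (if z = \<alpha> ^ (s + t) then 1 else (0::'a))) = (\<Sum>t\<in>{t0}. (if z = \<alpha> ^ (s + t) then 1 else 0))"
    using t0 uniq by (intro sum.mono_neutral_right) auto
  also have "\<dots> = 1" using t0 by simp
  also have "z \<in> Delta" unfolding Delta_def using t0 L_facts by (intro CollectI exI[of _ "s + t0"]) auto
  ultimately show ?thesis by simp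
next
  case False
  have "z \<notin> Delta"
  proof
    assume "z \<in> Delta"
    then obtain i where "s \<le> i" "i \<le> s + L - 1" "z = \<alpha> ^ i" unfolding Delta_def by auto
    hence "i - s < L" "z = \<alpha> ^ (s + (i - s))" using L_facts by auto
    thus False using False by blast
  qed
  moreover have "(\<Sum>t<L. (if z = \<alpha> ^ (s + t) then 1 else (0::'a))) = 0" using False by (intro sum.neutral) auto
  ultimately show ?thesis by simp
qed

lemma main_ident: "(\<Sum>i\<in>{1..N-2}. cf i * z ^ i) = (if z \<in> Delta then 1 else 0)"
proof (cases "z = 0")
  case True
  have "0 \<notin> Delta" unfolding Delta_def using alpha_nz by auto
  moreover have "(\<Sum>i\<in>{1..N-2}. cf i * z ^ i) = 0" using True by (intro sum.neutral) auto
  ultimately show ?thesis using True by simp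
next
  case False
  have "(\<Sum>i\<in>{1..N-2}. cf i * z ^ i) = (\<Sum>i\<in>{1..N-2}. \<Sum>t<L. (z * inverse (\<alpha> ^ (s + t))) ^ i)"
    unfolding cf_expand sum_distrib_right by (rule sum.cong) (simp_all add: power_mult_distrib mult.commute)
  also have "\<dots> = (\<Sum>t<L. \<Sum>i\<in>{1..N-2}. (z * inverse (\<alpha> ^ (s + t))) ^ i)" by (rule sum.swap)
  also have "\<dots> = (\<Sum>t<L. 1 + (if z = \<alpha> ^ (s + t) then 1 else 0))"
  proof (rule sum.cong[OF refl])
    fix t
    have nz: "z * inverse (\<alpha> ^ (s + t)) \<noteq> 0" using False alpha_nz by simp
    have "z * inverse (\<alpha> ^ (s + t)) = 1 \<longleftrightarrow> z = \<alpha> ^ (s + t)" using alpha_nz by (auto simp: field_simps)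
    thus "(\<Sum>i\<in>{1..N-2}. (z * inverse (\<alpha> ^ (s + t))) ^ i) = 1 + (if z = \<alpha> ^ (s + t) then 1 else 0)"
      using nz G_sum char2 by simp
  qed
  also have "\<dots> = of_nat L + (\<Sum>t<L. (if z = \<alpha> ^ (s + t) then 1 else 0))" by (simp add: sum.distrib)
  also have "(of_nat L :: 'a) = 0"
  proof -
    have h: "(of_nat L::'a) = (if even L then 0 else 1)" by (rule c2_of_nat[OF char2])
    show ?thesis using L_facts(2) by (simp only: h if_True)
  qed
  finally show ?thesis using Delta_count[OF False] by simp
qed

end

context ffs begin

definition "supp = {(\<gamma> * y powi u, y) | \<gamma> y. y ^ (2 ^ m) = y \<and> y \<noteq> 0 \<and> (\<exists>i. s \<le> i \<and> i \<le> s + 2 ^ (r * m - 1) - 1 \<and> \<gamma> = \<alpha> ^ i)}"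

lemma Q_eq: "(2 ^ (r * m) - 1) div (2 ^ m - 1) = Q" unfolding Q_def by simp

lemma split_sum:
  "(\<Sum>i\<in>{1..N-2}. F i) = (\<Sum>i\<in>{i\<in>{1..N-2}. \<not> M dvd i}. F i) + (\<Sum>j\<in>{1..Q-1}. F (M * j))"
proof -
  have Mpos: "M > 0" using M_ge by simp
  have img: "{i\<in>{1..N-2}. M dvd i} = (\<lambda>j. M * j) ` {1..Q-1}"
  proof
    show "{i\<in>{1..N-2}. M dvd i} \<subseteq> (\<lambda>j. M * j) ` {1..Q-1}"
    proof
      fix i assume i: "i \<in> {i\<in>{1..N-2}. M dvd i}"
      then obtain j where j: "i = M * j" by (auto elim: dvdE)
      have "j \<ge> 1" using i j by (cases j) auto
      moreover have "M * j < M * Q" using i j MQ N_ge by auto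
      hence "j < Q" by simp
      ultimately show "i \<in> (\<lambda>j. M * j) ` {1..Q-1}" using j by auto
    qed
    show "(\<lambda>j. M * j) ` {1..Q-1} \<subseteq> {i\<in>{1..N-2}. M dvd i}"
    proof
      fix i assume "i \<in> (\<lambda>j. M * j) ` {1..Q-1}"
      then obtain j where "j \<in> {1..Q-1}" "i = M * j" by blast
      hence j: "i = M * j" "1 \<le> j" "j \<le> Q - 1" by auto
      have "M * j \<le> M * (Q - 1)" using j by simp
      also have "\<dots> = N - 1 - M" using MQ by (simp add: right_diff_distrib')
      finally have "i \<le> N - 2" using j M_ge by simp
      moreover have "i \<ge> 1" using j Mpos by simp
      ultimately show "i \<in> {i\<in>{1..N-2}. M dvd i}" using j by auto
    qed
  qed
  have inj: "inj_on (\<lambda>j. M * j) {1..Q-1}" using Mpos by (auto simp: inj_on_def)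
  define A where "A = {i\<in>{1..N-2}. \<not> M dvd i}"
  define B where "B = {i\<in>{1..N-2}. M dvd i}"
  have "{1..N-2} = A \<union> B" unfolding A_def B_def by auto
  hence "(\<Sum>i\<in>{1..N-2}. F i) = (\<Sum>i\<in>A \<union> B. F i)"
    by simp
  also have "\<dots> = (\<Sum>i\<in>{i\<in>{1..N-2}. \<not> M dvd i}. F i) + (\<Sum>i\<in>{i\<in>{1..N-2}. M dvd i}. F i)"
    unfolding A_def B_def by (rule sum.union_disjoint) auto
  also have "(\<Sum>i\<in>{i\<in>{1..N-2}. M dvd i}. F i) = (\<Sum>j\<in>{1..Q-1}. F (M * j))"
    unfolding img by (rule sum.reindex[OF inj, unfolded o_def])
  finally show ?thesis .
qed

lemma powi_period:
  assumes "(y::'a) \<noteq> 0" "y ^ M = 1"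
  shows "y powi (a + int M * c) = y powi a"
proof -
  have "y powi (int M * c) = (y powi int M) powi c" by (rule power_int_mult)
  also have "y powi int M = y ^ M" by (rule power_int_of_nat)
  finally have "y powi (int M * c) = 1" using assms by simp
  thus ?thesis using assms by (simp add: power_int_add)
qed

lemma formula:
  assumes yK: "y \<in> K"
  shows "(if (x, y) \<in> supp then 1 else 0) =
              (\<Sum>i\<in>{i\<in>{1..2 ^ (r * m) - 2}. \<not> (2 ^ m - 1) dvd i}.
                 inverse (\<alpha> ^ (i * s)) * (1 + inverse (\<alpha> ^ i)) ^ (2 ^ (r * m - 1) - 1)
                 * x ^ i * y ^ (2 ^ m - 1 - nat ((u * int i) mod (2 ^ m - 1))))
            + (\<Sum>j\<in>{1..(2 ^ (r * m) - 1) div (2 ^ m - 1) - 1}.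
                 inverse (\<alpha> ^ ((2 ^ m - 1) * j * s))
                 * (1 + inverse (\<alpha> ^ ((2 ^ m - 1) * j))) ^ (2 ^ (r * m - 1) - 1)
                 * x ^ ((2 ^ m - 1) * j) * y ^ (2 ^ m - 1))"
    (is "?L = ?S1 + ?S2")
proof -
  have Mi: "(2::int) ^ m - 1 = int M" by (simp add: of_nat_diff)
  have Mpos: "M > 0" using M_ge by simp
  have S1: "?S1 = (\<Sum>i\<in>{i\<in>{1..N-2}. \<not> M dvd i}. cf i * x ^ i * y ^ (M - nat ((u * int i) mod int M)))"
    unfolding cf_def Mi by simp
  have S2: "?S2 = (\<Sum>j\<in>{1..Q-1}. cf (M * j) * x ^ (M * j) * y ^ M)"
    unfolding cf_def Q_eq by (simp add: mult.assoc)
  show ?thesis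
  proof (cases "y = 0")
    case True
    have "?L = 0" unfolding supp_def using True by auto
    moreover have "?S1 = 0" unfolding S1
    proof (rule sum.neutral, rule ballI)
      fix i
      have ip: "int M > 0" using Mpos by (simp only: of_nat_0_less_iff)
      have h: "(u * int i) mod int M < int M" "0 \<le> (u * int i) mod int M"
        by (rule pos_mod_bound[OF ip], rule pos_mod_sign[OF ip])
      have "nat ((u * int i) mod int M) < M" by (subst nat_less_iff) (use h in auto)
      hence "M - nat ((u * int i) mod int M) \<noteq> 0" by simp
      thus "cf i * x ^ i * y ^ (M - nat ((u * int i) mod int M)) = 0" using True by simp
    qed
    moreover have "?S2 = 0"
    proof -
      have z: "(0::'a)^M = 0" by (rule zero_power[OF Mpos])
      show ?thesis unfolding S2 True z by simp
    qed
    ultimately show ?thesis by simp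
  next
    case False
    have yM: "y ^ M = 1" using K_nz_iff[OF False] yK by simp
    define w where "w = y powi (- u)"
    have wi: "y ^ (M - nat ((u * int i) mod int M)) = w ^ i" for i
    proof -
      define a where "a = (u * int i) mod int M"
      have ip: "int M > 0" using Mpos by (simp only: of_nat_0_less_iff)
      have a: "0 \<le> a" "a < int M" unfolding a_def
        by (rule pos_mod_sign[OF ip], rule pos_mod_bound[OF ip])
      have le: "nat a \<le> M" unfolding nat_le_iff using a(2) by linarith
      have ia: "int (M - nat a) = int M - a" using of_nat_diff[OF le, where 'a=int] a(1) by simp
      have "y ^ (M - nat a) = y powi int (M - nat a)" by (rule power_int_of_nat[symmetric])
      also have "\<dots> = y powi (int M - a)" by (simp only: ia)
      also have "int M - a = - u * int i + int M * ((u * int i) div int M + 1)"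
        unfolding a_def by (simp add: algebra_simps minus_mod_eq_mult_div[symmetric])
      also have "y powi \<dots> = y powi (- u * int i)" by (rule powi_period[OF False yM])
      also have "\<dots> = w ^ i" unfolding w_def by (simp add: power_int_power')
      finally show ?thesis unfolding a_def .
    qed
    have wM: "w ^ (M * j) = 1" for j
    proof -
      have "w ^ (M * j) = y powi (- u * int (M * j))" unfolding w_def by (simp add: power_int_power')
      also have "- u * int (M * j) = 0 + int M * (- u * int j)" by simp
      also have "y powi \<dots> = 1" using powi_period[OF False yM, of 0 "- u * int j"] by simp
      finally show ?thesis .
    qed
    have "?S1 + ?S2 = (\<Sum>i\<in>{i\<in>{1..N-2}. \<not> M dvd i}. cf i * (x * w) ^ i) + (\<Sum>j\<in>{1..Q-1}. cf (M * j) * (x * w) ^ (M * j))"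
    proof -
      have A: "(\<Sum>i\<in>{i\<in>{1..N-2}. \<not> M dvd i}. cf i * x ^ i * y ^ (M - nat ((u * int i) mod int M)))
          = (\<Sum>i\<in>{i\<in>{1..N-2}. \<not> M dvd i}. cf i * (x * w) ^ i)"
        by (rule sum.cong[OF refl]) (simp only: wi power_mult_distrib mult.assoc)
      have B: "(\<Sum>j\<in>{1..Q-1}. cf (M * j) * x ^ (M * j) * y ^ M) = (\<Sum>j\<in>{1..Q-1}. cf (M * j) * (x * w) ^ (M * j))"
        by (rule sum.cong[OF refl]) (simp only: yM wM power_mult_distrib mult_1_right)
      show ?thesis unfolding S1 S2 A B ..
    qed
    also have "\<dots> = (\<Sum>i\<in>{1..N-2}. cf i * (x * w) ^ i)" by (rule split_sum[symmetric])
    also have "\<dots> = (if x * w \<in> Delta then 1 else 0)" by (rule main_ident)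
    also have "(x * w \<in> Delta) = ((x, y) \<in> supp)"
    proof -
      have yu: "y powi u * w = 1" unfolding w_def using False by (simp add: power_int_minus)
      have "(x, y) \<in> supp \<longleftrightarrow> (\<exists>\<gamma>. \<gamma> \<in> Delta \<and> x = \<gamma> * y powi u)"
        unfolding supp_def Delta_def using False yK unfolding K_def by auto
      also have "\<dots> \<longleftrightarrow> x * w \<in> Delta"
      proof
        assume "\<exists>\<gamma>. \<gamma> \<in> Delta \<and> x = \<gamma> * y powi u"
        then obtain \<gamma> where g1: "\<gamma> \<in> Delta" and g2: "x = \<gamma> * y powi u" by auto
        have "x * w = \<gamma> * (y powi u * w)" using g2 by (simp add: mult.assoc)
        also have "\<dots> = \<gamma>" using yu by simp
        finally show "x * w \<in> Delta" using g1 by simp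
      next
        assume "x * w \<in> Delta"
        moreover have "x = (x * w) * y powi u" using yu by (simp add: mult.assoc mult.commute)
        ultimately show "\<exists>\<gamma>. \<gamma> \<in> Delta \<and> x = \<gamma> * y powi u" by blast
      qed
      finally show ?thesis by simp
    qed
    finally show ?thesis by simp
  qed
qed

end

lemma additive_zero:
  fixes h :: "'b::ab_group_add \<Rightarrow> 'c::ab_group_add"
  assumes "0 \<in> G" "\<forall>x\<in>G. \<forall>y\<in>G. h (x + y) = h x + h y"
  shows "h 0 = 0"
proof -
  have "h (0 + 0) = h 0 + h 0" using assms by blast
  thus ?thesis by simp
qed

lemma additive_lsum:
  fixes h :: "'b::ab_group_add \<Rightarrow> 'c::ab_group_add"
  assumes z: "0 \<in> G" and cl: "\<forall>x\<in>G. \<forall>y\<in>G. x + y \<in> G" and bG: "\<forall>t<k. b t \<in> G"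
    and add: "\<forall>x\<in>G. \<forall>y\<in>G. h (x + y) = h x + h y"
  shows "h (lsum k b v) = lsum k (\<lambda>t. h (b t)) v"
  using bG
proof (induction k)
  case 0 then show ?case using additive_zero[OF z add] by (simp add: lsum_def)
next
  case (Suc k)
  have in1: "lsum k b v \<in> G" using lsum_in[OF z cl] Suc.prems by auto
  have in2: "(if v k then b k else 0) \<in> G" using Suc.prems z by auto
  have "lsum (Suc k) b v = lsum k b v + (if v k then b k else 0)" by (simp add: lsum_def)
  hence "h (lsum (Suc k) b v) = h (lsum k b v) + h (if v k then b k else 0)" using add in1 in2 by simp
  also have "h (if v k then b k else 0) = (if v k then h (b k) else 0)" using additive_zero[OF z add] by simp
  finally show ?case using Suc by (simp add: lsum_def)
qed

context ff begin

lemma linearized_inj: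
  fixes G :: "'a set"
  assumes cG: "card G = 2 ^ k" and ceq: "\<forall>x\<in>G. (\<Sum>t<k. c t * x ^ (2 ^ t)) = (\<Sum>t<k. c' t * x ^ (2 ^ t))"
    and tk: "t < k"
  shows "c t = c' t"
proof -
  define p where "p = (\<Sum>t<k. monom (c t - c' t) (2 ^ t))"
  have cp: "coeff p i = (\<Sum>t<k. if 2 ^ t = i then c t - c' t else 0)" for i
    unfolding p_def coeff_sum by simp
  have pv: "poly p x = (\<Sum>t<k. c t * x ^ (2 ^ t)) - (\<Sum>t<k. c' t * x ^ (2 ^ t))" for x
    unfolding p_def poly_sum poly_monom sum_subtractf[symmetric] by (simp add: algebra_simps)
  have "p = 0"
  proof (rule ccontr)
    assume p0: "p \<noteq> 0"
    have k0: "k > 0" using tk by simp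
    have "degree p \<le> 2 ^ (k - 1)"
    proof (rule degree_le, intro allI impI)
      fix i :: nat assume i: "2 ^ (k - 1) < i"
      have "\<And>t. t < k \<Longrightarrow> 2 ^ t \<noteq> i"
      proof -
        fix t assume "t < k"
        hence "(2::nat) ^ t \<le> 2 ^ (k - 1)" by (intro power_increasing) auto
        thus "2 ^ t \<noteq> i" using i by linarith
      qed
      thus "coeff p i = 0" unfolding cp by (intro sum.neutral) auto
    qed
    also have "\<dots> < 2 ^ k" using k0 by (intro power_strict_increasing) auto
    also have "2 ^ k = card G" using cG by simp
    also have "card G \<le> card {x. poly p x = 0}"
      by (rule card_mono[OF poly_roots_finite[OF p0]]) (use ceq pv in auto)
    also have "\<dots> \<le> degree p" by (rule card_poly_roots_bound[OF p0])
    finally show False by simp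
  qed
  hence "coeff p (2 ^ t) = 0" by simp
  moreover have "coeff p (2 ^ t) = c t - c' t"
  proof -
    have "coeff p (2 ^ t) = (\<Sum>s\<in>{t}. if 2 ^ s = (2::nat) ^ t then c s - c' s else 0)"
      unfolding cp using tk by (intro sum.mono_neutral_right) auto
    thus ?thesis by simp
  qed
  ultimately show ?thesis by simp
qed

lemma linearized:
  fixes G :: "'a set"
  assumes z: "0 \<in> G" and cl: "\<forall>x\<in>G. \<forall>y\<in>G. x + y \<in> G" and cG: "card G = 2 ^ k"
    and add: "\<forall>x\<in>G. \<forall>y\<in>G. ll (x + y) = ll x + ll y"
  shows "\<exists>c. \<forall>x\<in>G. ll x = (\<Sum>t<k. c t * x ^ (2 ^ t))"
proof -
  have c2: "\<forall>x::'a. x + x = 0" using c2_add_self[OF char2] by simp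
  obtain b where bG: "\<forall>t<k. b t \<in> G" and bij: "bij_betw (lsum k b) (bvecs k) G"
    using greedy[OF c2 z cl finite cG] by blast
  define lin where "lin c = restrict (\<lambda>x. \<Sum>t<k. c t * x ^ (2 ^ t)) G" for c :: "nat \<Rightarrow> 'a"
  define Lin where "Lin = lin ` ({..<k} \<rightarrow>\<^sub>E UNIV)"
  define Add where "Add = {h \<in> G \<rightarrow>\<^sub>E (UNIV :: 'a set). \<forall>x\<in>G. \<forall>y\<in>G. h (x + y) = h x + h y}"
  have finAdd: "finite Add" by (rule finite)
  have frob: "(x + y) ^ (2 ^ t) = x ^ (2 ^ t) + y ^ (2 ^ t)" for x y :: 'a and t by (rule c2_frob[OF char2])
  have LinAdd: "Lin \<subseteq> Add"
  proof
    fix h assume "h \<in> Lin"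
    then obtain c where h: "h = lin c" unfolding Lin_def by auto
    show "h \<in> Add" unfolding Add_def h lin_def
      using cl by (auto simp: frob distrib_left sum.distrib)
  qed
  have injlin: "inj_on lin ({..<k} \<rightarrow>\<^sub>E UNIV)"
  proof (rule inj_onI)
    fix c c' assume c: "c \<in> {..<k} \<rightarrow>\<^sub>E UNIV" and c': "c' \<in> {..<k} \<rightarrow>\<^sub>E UNIV" and eq: "lin c = lin c'"
    have "\<forall>x\<in>G. (\<Sum>t<k. c t * x ^ (2 ^ t)) = (\<Sum>t<k. c' t * x ^ (2 ^ t))"
    proof
      fix x assume "x \<in> G"
      thus "(\<Sum>t<k. c t * x ^ (2 ^ t)) = (\<Sum>t<k. c' t * x ^ (2 ^ t))"
        using fun_cong[OF eq, of x] unfolding lin_def by simp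
    qed
    hence "c t = c' t" if "t < k" for t using linearized_inj[OF cG _ that] by blast
    thus "c = c'" using c c' by (intro PiE_ext) auto
  qed
  have cLin: "card Lin = card ({..<k} \<rightarrow>\<^sub>E (UNIV :: 'a set))"
    unfolding Lin_def by (rule card_image[OF injlin])
  define ev where "ev h = restrict (\<lambda>t. h (b t)) {..<k}" for h :: "'a \<Rightarrow> 'a"
  have injev: "inj_on ev Add"
  proof (rule inj_onI)
    fix h h' assume h: "h \<in> Add" and h': "h' \<in> Add" and eq: "ev h = ev h'"
    have hb: "h (b t) = h' (b t)" if "t < k" for t using fun_cong[OF eq, of t] that unfolding ev_def by simp
    show "h = h'"
    proof (rule ext)
      fix x
      show "h x = h' x"
      proof (cases "x \<in> G")
        case True
        then obtain v where v: "x = lsum k b v" using bij unfolding bij_betw_def by auto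
        have "h x = lsum k (\<lambda>t. h (b t)) v"
          unfolding v by (rule additive_lsum[OF z cl bG]) (use h in \<open>auto simp: Add_def\<close>)
        also have "\<dots> = lsum k (\<lambda>t. h' (b t)) v" unfolding lsum_def using hb by (intro sum.cong) auto
        also have "\<dots> = h' x"
          unfolding v by (rule additive_lsum[OF z cl bG, symmetric]) (use h' in \<open>auto simp: Add_def\<close>)
        finally show ?thesis .
      next
        case False
        then show ?thesis using h h' unfolding Add_def by (auto simp: PiE_def extensional_def)
      qed
    qed
  qed
  have "card Add \<le> card ({..<k} \<rightarrow>\<^sub>E (UNIV :: 'a set))"
  proof -
    have "card Add = card (ev ` Add)" by (rule card_image[OF injev, symmetric])
    also have "\<dots> \<le> card ({..<k} \<rightarrow>\<^sub>E (UNIV :: 'a set))"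
    proof (rule card_mono)
      show "finite ({..<k} \<rightarrow>\<^sub>E (UNIV :: 'a set))" by (rule finite_PiE) auto
      show "ev ` Add \<subseteq> {..<k} \<rightarrow>\<^sub>E UNIV" unfolding ev_def by (rule image_subsetI, rule iffD2[OF restrict_PiE_iff]) simp
    qed
    finally show ?thesis .
  qed
  hence "Lin = Add" using card_subset_eq[OF finAdd LinAdd] card_mono[OF finAdd LinAdd] cLin by simp
  moreover have "restrict ll G \<in> Add" unfolding Add_def using add cl by auto
  ultimately obtain c where c: "restrict ll G = lin c" unfolding Lin_def by auto
  have "\<forall>x\<in>G. ll x = (\<Sum>t<k. c t * x ^ (2 ^ t))"
  proof
    fix x assume "x \<in> G"
    thus "ll x = (\<Sum>t<k. c t * x ^ (2 ^ t))" using fun_cong[OF c, of x] unfolding lin_def by simp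
  qed
  thus ?thesis by blast
qed

end

lemma bs_compl_sum:
  assumes "x < 2 ^ w"
  shows "x + (\<Sum>t\<in>{..<w} - bs x. (2::nat) ^ t) = 2 ^ w - 1"
proof -
  have sub: "bs x \<subseteq> {..<w}" by (rule bs_less[OF assms])
  have "x + (\<Sum>t\<in>{..<w} - bs x. (2::nat) ^ t) = (\<Sum>t\<in>bs x. 2 ^ t) + (\<Sum>t\<in>{..<w} - bs x. 2 ^ t)"
    by (simp add: bs_sum)
  also have "\<dots> = (\<Sum>t<w. 2 ^ t)" using sub by (metis finite_lessThan sum.subset_diff add.commute)
  also have "\<dots> = 2 ^ w - 1" by (induction w) simp_all
  finally show ?thesis .
qed

lemma wt_le_len: "x < 2 ^ w \<Longrightarrow> wt x + card ({..<w} - bs x) = w"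
proof -
  assume "x < 2 ^ w"
  hence sub: "bs x \<subseteq> {..<w}" by (rule bs_less)
  hence "card ({..<w} - bs x) = w - card (bs x)" by (simp add: card_Diff_subset finite_subset)
  moreover have "card (bs x) \<le> w" using card_mono[OF _ sub] by simp
  ultimately show ?thesis unfolding wt_def by simp
qed

lemma wt_lt_mask: "x < 2 ^ w - 1 \<Longrightarrow> wt x < w"
proof -
  assume a: "x < 2 ^ w - 1"
  hence x: "x < 2 ^ w" by simp
  have "{..<w} - bs x \<noteq> {}"
  proof
    assume e: "{..<w} - bs x = {}"
    have "x + (\<Sum>t\<in>{..<w} - bs x. (2::nat)^t) = x" by (simp only: e sum.empty add_0_right)
    hence "x = 2 ^ w - 1" using bs_compl_sum[OF x] by simp
    thus False using a by simp
  qed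
  hence "card ({..<w} - bs x) > 0" by (simp add: card_gt_0_iff)
  thus ?thesis using wt_le_len[OF x] by simp
qed

lemma odd_dvd_pow2: "odd (M::nat) \<Longrightarrow> M dvd 2 ^ t \<Longrightarrow> M = 1"
proof (induction t)
  case 0 then show ?case by simp
next
  case (Suc t)
  have "coprime M 2" using Suc.prems(1) by simp
  hence "M dvd 2 ^ t" using Suc.prems(2) coprime_dvd_mult_right_iff[of M 2 "2^t"] by simp
  then show ?case using Suc by simp
qed

lemma wt_le_minus2:
  assumes x: "x < 2 ^ w" and xm: "x \<noteq> 2 ^ w - 1" and nm: "\<And>t. x \<noteq> 2 ^ w - 1 - 2 ^ t" and w: "w \<ge> 2"
  shows "wt x \<le> w - 2"
proof -
  define C where "C = {..<w} - bs x"
  have cs: "x + (\<Sum>t\<in>C. (2::nat) ^ t) = 2 ^ w - 1" unfolding C_def by (rule bs_compl_sum[OF x])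
  have "card C \<noteq> 0"
  proof
    assume "card C = 0"
    hence "C = {}" unfolding C_def by simp
    thus False using cs xm by simp
  qed
  moreover have "card C \<noteq> 1"
  proof
    assume "card C = 1"
    then obtain t where "C = {t}" by (auto simp: card_Suc_eq)
    hence "x = 2 ^ w - 1 - 2 ^ t" using cs by simp
    thus False using nm[of t] by simp
  qed
  ultimately have "card C \<ge> 2" by simp
  thus ?thesis using wt_le_len[OF x] unfolding C_def by simp
qed

section \<open>ANF degree lemmas\<close>

definition ind :: "nat set \<Rightarrow> nat \<Rightarrow> bool" where "ind T = (\<lambda>i. i \<in> T)"

lemma ind_bvecs: "T \<subseteq> {..<n} \<Longrightarrow> ind T \<in> bvecs n"
  unfolding ind_def bvecs_def by auto

lemma bvecs_ind: "v \<in> bvecs n \<Longrightarrow> v = ind {i. v i} \<and> {i. v i} \<subseteq> {..<n}"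
  unfolding ind_def bvecs_def by (auto simp: not_le[symmetric])

lemma prod_of_bool: "finite S \<Longrightarrow> (\<Prod>i\<in>S. (if P i then 1 else 0::'b::comm_semiring_1)) = (if \<forall>i\<in>S. P i then 1 else 0)"
  by (induction S rule: finite_induct) auto

lemma card_filter_of_nat: "finite A \<Longrightarrow> (of_nat (card {x\<in>A. P x}) :: 'b::comm_semiring_1) = (\<Sum>x\<in>A. if P x then 1 else 0)"
  by (simp add: sum.If_cases Int_def)

context ff begin

abbreviation B :: "bool \<Rightarrow> 'a" where "B p \<equiv> (if p then 1 else 0)"

lemma B_odd: "B (odd c) = of_nat c"
  using c2_of_nat[OF char2, of c] by simp

lemma B_inj: "B p = B q \<Longrightarrow> p = q"
  by (cases p; cases q) auto

lemma B_xor: "B (p \<noteq> q) = B p + B q"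
  using char2 by (cases p; cases q) auto

lemma anf_upper:
  assumes ev: "\<And>S. S \<subseteq> {..<n} \<Longrightarrow> card S > d \<Longrightarrow> even (card {T. T \<subseteq> S \<and> g (ind T)})"
  shows "anf_degree n g \<le> d"
proof -
  define a where "a S = odd (card {T. T \<subseteq> S \<and> g (ind T)})" for S
  have deg: "\<forall>S. S \<subseteq> {..<n} \<and> a S \<longrightarrow> card S \<le> d"
    unfolding a_def using ev not_le by blast
  have rep: "\<forall>v\<in>bvecs n. g v = odd (card {S. S \<subseteq> {..<n} \<and> a S \<and> (\<forall>i\<in>S. v i)})"
  proof
    fix v assume v: "v \<in> bvecs n"
    define V where "V = {i. v i}"
    have vV: "v = ind V" and Vn: "V \<subseteq> {..<n}" using bvecs_ind[OF v] unfolding V_def by auto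
    have fV: "finite V" using Vn finite_subset by auto
    have set: "{S. S \<subseteq> {..<n} \<and> a S \<and> (\<forall>i\<in>S. v i)} = {S\<in>Pow V. a S}"
      unfolding V_def using Vn V_def by auto
    have "B (odd (card {S\<in>Pow V. a S})) = (\<Sum>S\<in>Pow V. B (a S))"
      unfolding B_odd by (rule card_filter_of_nat) (simp add: fV)
    also have "\<dots> = (\<Sum>S\<in>Pow V. \<Sum>T\<in>Pow S. B (g (ind T)))"
    proof (rule sum.cong[OF refl])
      fix S assume "S \<in> Pow V"
      hence fS: "finite S" using fV finite_subset by auto
      have "{T. T \<subseteq> S \<and> g (ind T)} = {T\<in>Pow S. g (ind T)}" by auto
      thus "B (a S) = (\<Sum>T\<in>Pow S. B (g (ind T)))"
        unfolding a_def B_odd using card_filter_of_nat[of "Pow S" "\<lambda>T. g (ind T)"] fS by simp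
    qed
    also have "\<dots> = B (g (ind V))" by (rule mobius[OF char2 fV])
    finally have "odd (card {S\<in>Pow V. a S}) = g (ind V)" by (rule B_inj)
    thus "g v = odd (card {S. S \<subseteq> {..<n} \<and> a S \<and> (\<forall>i\<in>S. v i)})" using set vV by simp
  qed
  show ?thesis unfolding anf_degree_def by (rule Least_le) (use deg rep in blast)
qed

lemma anf_rep_sum:
  assumes rep: "\<forall>v\<in>bvecs n. g v = odd (card {S. S \<subseteq> {..<n} \<and> a S \<and> (\<forall>i\<in>S. v i)})"
    and v: "v \<in> bvecs n"
  shows "B (g v) = (\<Sum>S\<in>{S. S \<subseteq> {..<n} \<and> a S}. \<Prod>i\<in>S. B (v i))"
proof -
  have fA: "finite {S. S \<subseteq> {..<n} \<and> a S}" by (rule finite_subset[of _ "Pow {..<n}"]) auto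
  have "B (g v) = of_nat (card {S\<in>{S. S \<subseteq> {..<n} \<and> a S}. \<forall>i\<in>S. v i})"
    using rep v B_odd by (simp add: conj_assoc)
  also have "\<dots> = (\<Sum>S\<in>{S. S \<subseteq> {..<n} \<and> a S}. B (\<forall>i\<in>S. v i))" by (rule card_filter_of_nat[OF fA])
  also have "\<dots> = (\<Sum>S\<in>{S. S \<subseteq> {..<n} \<and> a S}. \<Prod>i\<in>S. B (v i))"
  proof (rule sum.cong[OF refl])
    fix S assume "S \<in> {S. S \<subseteq> {..<n} \<and> a S}"
    hence "finite S" using finite_subset by auto
    thus "B (\<forall>i\<in>S. v i) = (\<Prod>i\<in>S. B (v i))" by (simp add: prod_of_bool)
  qed
  finally show ?thesis .
qed

section \<open>Monomial sums\<close>

lemma pow_bs: "(x::'a) ^ a = (\<Prod>t\<in>bs a. x ^ (2 ^ t))"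
proof -
  have "x ^ a = x ^ (\<Sum>t\<in>bs a. 2 ^ t)" by (simp add: bs_sum)
  thus ?thesis by (simp add: power_sum)
qed

lemma mono_sum:
  assumes fS: "finite S" and w: "wt a + wt b < card S"
  shows "(\<Sum>T\<in>Pow S. (\<Sum>l\<in>T. X l) ^ a * (\<Sum>l\<in>T. Y l) ^ b) = (0::'a)"
proof -
  define I where "I = Inl ` bs a \<union> Inr ` bs b"
  define c where "c \<tau> l = (case \<tau> of Inl t \<Rightarrow> X l ^ (2 ^ t) | Inr t \<Rightarrow> Y l ^ (2 ^ t))" for \<tau> :: "nat + nat" and l
  have fI: "finite I" unfolding I_def by simp
  have cI: "card I = wt a + wt b" unfolding I_def wt_def
    by (subst card_Un_disjoint) (auto simp: card_image)
  have eq: "(\<Sum>l\<in>T. X l) ^ a * (\<Sum>l\<in>T. Y l) ^ b = (\<Prod>\<tau>\<in>I. \<Sum>l\<in>T. c \<tau> l)" for T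
  proof -
    have "(\<Prod>\<tau>\<in>I. \<Sum>l\<in>T. c \<tau> l) = (\<Prod>\<tau>\<in>Inl ` bs a. \<Sum>l\<in>T. c \<tau> l) * (\<Prod>\<tau>\<in>Inr ` bs b. \<Sum>l\<in>T. c \<tau> l)"
      unfolding I_def by (rule prod.union_disjoint) auto
    also have "(\<Prod>\<tau>\<in>Inl ` bs a. \<Sum>l\<in>T. c \<tau> l) = (\<Prod>t\<in>bs a. \<Sum>l\<in>T. X l ^ (2 ^ t))"
      by (subst prod.reindex) (auto simp: c_def)
    also have "\<dots> = (\<Prod>t\<in>bs a. (\<Sum>l\<in>T. X l) ^ (2 ^ t))" by (simp add: c2_frob_sum[OF char2])
    also have "\<dots> = (\<Sum>l\<in>T. X l) ^ a" by (rule pow_bs[symmetric])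
    also have "(\<Prod>\<tau>\<in>Inr ` bs b. \<Sum>l\<in>T. c \<tau> l) = (\<Prod>t\<in>bs b. \<Sum>l\<in>T. Y l ^ (2 ^ t))"
      by (subst prod.reindex) (auto simp: c_def)
    also have "\<dots> = (\<Prod>t\<in>bs b. (\<Sum>l\<in>T. Y l) ^ (2 ^ t))" by (simp add: c2_frob_sum[OF char2])
    also have "\<dots> = (\<Sum>l\<in>T. Y l) ^ b" by (rule pow_bs[symmetric])
    finally show ?thesis by simp
  qed
  show ?thesis unfolding eq by (rule lin_prod_sum[OF char2 fI fS]) (simp add: cI w)
qed

end

context ff begin

definition e1 :: "nat + nat \<Rightarrow> nat" where "e1 \<tau> = (case \<tau> of Inl t \<Rightarrow> 2 ^ t | Inr t \<Rightarrow> 0)"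
definition e2 :: "nat + nat \<Rightarrow> nat" where "e2 \<tau> = (case \<tau> of Inl t \<Rightarrow> 0 | Inr t \<Rightarrow> 2 ^ t)"
definition il :: "nat + nat \<Rightarrow> bool" where "il \<tau> = (case \<tau> of Inl t \<Rightarrow> True | Inr t \<Rightarrow> False)"

lemma wt_e1: "wt (e1 \<tau>) = (if il \<tau> then 1 else 0)"
  by (cases \<tau>) (simp_all add: e1_def il_def)

lemma e2_il: "il \<tau> \<Longrightarrow> e2 \<tau> = 0"
  by (cases \<tau>) (simp_all add: e2_def il_def)

lemma key_factor:
  assumes fS: "finite S" and cS: "card S < r * m" and ub: "0 < ub" "ub < M"
  shows "(\<Sum>x\<in>(UNIV::'a set). x ^ (1 + (\<Sum>i\<in>S. e1 (\<sigma> i)))) * (\<Sum>y\<in>K. y ^ (ub + (\<Sum>i\<in>S. e2 (\<sigma> i)))) = 0"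
proof (cases "(N - 1) dvd (1 + (\<Sum>i\<in>S. e1 (\<sigma> i)))")
  case False
  then show ?thesis using sum_F[of "1 + (\<Sum>i\<in>S. e1 (\<sigma> i))"] by simp
next
  case True
  define SL where "SL = {i\<in>S. il (\<sigma> i)}"
  have "r * m \<le> wt (1 + (\<Sum>i\<in>S. e1 (\<sigma> i)))" by (rule wt_dvd) (use rm_ge r_pos m_ge True in auto)
  also have "\<dots> \<le> wt 1 + wt (\<Sum>i\<in>S. e1 (\<sigma> i))" by (rule wt_add)
  also have "wt (\<Sum>i\<in>S. e1 (\<sigma> i)) \<le> (\<Sum>i\<in>S. wt (e1 (\<sigma> i)))" by (rule wt_sum)
  also have "(\<Sum>i\<in>S. wt (e1 (\<sigma> i))) = card SL"
    unfolding SL_def wt_e1 using fS by (simp add: sum.If_cases Int_def)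
  also have "wt 1 = 1" using wt_pow2[of 0] by simp
  finally have "card SL \<ge> card S" using cS by simp
  moreover have "SL \<subseteq> S" unfolding SL_def by auto
  ultimately have "SL = S" using card_subset_eq[OF fS] card_mono[OF fS] by (meson le_antisym)
  hence "(\<Sum>i\<in>S. e2 (\<sigma> i)) = 0" unfolding SL_def by (intro sum.neutral) (auto intro: e2_il)
  moreover have "\<not> M dvd ub" using ub by (auto dest: nat_dvd_not_less)
  ultimately show ?thesis using sum_K[of ub] ub by simp
qed

lemma E0:
  assumes fS: "finite S" and cS: "card S < r * m" and ub: "0 < ub" "ub < M"
  shows "(\<Sum>x\<in>(UNIV::'a set). \<Sum>y\<in>K. x * y ^ ub *
            (\<Prod>i\<in>S. (\<Sum>t<r*m. c i t * x ^ (2 ^ t)) + (\<Sum>t<m. d i t * y ^ (2 ^ t)))) = 0"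
proof -
  define I where "I = Inl ` {..<r*m} \<union> Inr ` {..<m}"
  define cc where "cc i \<tau> = (case \<tau> of Inl t \<Rightarrow> c i t | Inr t \<Rightarrow> d i t)" for i \<tau>
  have fI: "finite I" unfolding I_def by simp
  have lin: "(\<Sum>t<r*m. c i t * x ^ (2 ^ t)) + (\<Sum>t<m. d i t * y ^ (2 ^ t))
      = (\<Sum>\<tau>\<in>I. cc i \<tau> * x ^ e1 \<tau> * y ^ e2 \<tau>)" for i x y
  proof -
    have "(\<Sum>\<tau>\<in>I. cc i \<tau> * x ^ e1 \<tau> * y ^ e2 \<tau>) = (\<Sum>\<tau>\<in>Inl ` {..<r*m}. cc i \<tau> * x ^ e1 \<tau> * y ^ e2 \<tau>)
        + (\<Sum>\<tau>\<in>Inr ` {..<m}. cc i \<tau> * x ^ e1 \<tau> * y ^ e2 \<tau>)"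
      unfolding I_def by (rule sum.union_disjoint) auto
    also have "(\<Sum>\<tau>\<in>Inl ` {..<r*m}. cc i \<tau> * x ^ e1 \<tau> * y ^ e2 \<tau>) = (\<Sum>t<r*m. c i t * x ^ (2 ^ t))"
      by (subst sum.reindex) (auto simp: cc_def e1_def e2_def)
    also have "(\<Sum>\<tau>\<in>Inr ` {..<m}. cc i \<tau> * x ^ e1 \<tau> * y ^ e2 \<tau>) = (\<Sum>t<m. d i t * y ^ (2 ^ t))"
      by (subst sum.reindex) (auto simp: cc_def e1_def e2_def)
    finally show ?thesis by simp
  qed
  have expand: "x * y ^ ub * (\<Prod>i\<in>S. (\<Sum>t<r*m. c i t * x ^ (2 ^ t)) + (\<Sum>t<m. d i t * y ^ (2 ^ t)))
      = (\<Sum>\<sigma>\<in>S \<rightarrow>\<^sub>E I. (\<Prod>i\<in>S. cc i (\<sigma> i)) * (x ^ (1 + (\<Sum>i\<in>S. e1 (\<sigma> i))) * y ^ (ub + (\<Sum>i\<in>S. e2 (\<sigma> i)))))" for x y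
  proof -
    have "(\<Prod>i\<in>S. (\<Sum>t<r*m. c i t * x ^ (2 ^ t)) + (\<Sum>t<m. d i t * y ^ (2 ^ t)))
        = (\<Prod>i\<in>S. \<Sum>\<tau>\<in>I. cc i \<tau> * x ^ e1 \<tau> * y ^ e2 \<tau>)" by (simp only: lin)
    also have "\<dots> = (\<Sum>\<sigma>\<in>S \<rightarrow>\<^sub>E I. \<Prod>i\<in>S. cc i (\<sigma> i) * x ^ e1 (\<sigma> i) * y ^ e2 (\<sigma> i))"
      by (rule prod_sum_PiE[OF fS]) (simp add: fI)
    also have "\<dots> = (\<Sum>\<sigma>\<in>S \<rightarrow>\<^sub>E I. (\<Prod>i\<in>S. cc i (\<sigma> i)) * (x ^ (\<Sum>i\<in>S. e1 (\<sigma> i)) * y ^ (\<Sum>i\<in>S. e2 (\<sigma> i))))"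
      by (rule sum.cong[OF refl]) (simp add: prod.distrib power_sum)
    finally have "x * y ^ ub * (\<Prod>i\<in>S. (\<Sum>t<r*m. c i t * x ^ (2 ^ t)) + (\<Sum>t<m. d i t * y ^ (2 ^ t)))
        = (\<Sum>\<sigma>\<in>S \<rightarrow>\<^sub>E I. x * y ^ ub * ((\<Prod>i\<in>S. cc i (\<sigma> i)) * (x ^ (\<Sum>i\<in>S. e1 (\<sigma> i)) * y ^ (\<Sum>i\<in>S. e2 (\<sigma> i)))))"
      by (simp add: sum_distrib_left)
    also have "\<dots> = (\<Sum>\<sigma>\<in>S \<rightarrow>\<^sub>E I. (\<Prod>i\<in>S. cc i (\<sigma> i)) * (x ^ (1 + (\<Sum>i\<in>S. e1 (\<sigma> i))) * y ^ (ub + (\<Sum>i\<in>S. e2 (\<sigma> i)))))"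
      by (rule sum.cong[OF refl]) (simp add: power_add algebra_simps)
    finally show ?thesis .
  qed
  have "(\<Sum>x\<in>(UNIV::'a set). \<Sum>y\<in>K. x * y ^ ub *
            (\<Prod>i\<in>S. (\<Sum>t<r*m. c i t * x ^ (2 ^ t)) + (\<Sum>t<m. d i t * y ^ (2 ^ t))))
      = (\<Sum>x\<in>(UNIV::'a set). \<Sum>y\<in>K. \<Sum>\<sigma>\<in>S \<rightarrow>\<^sub>E I. (\<Prod>i\<in>S. cc i (\<sigma> i)) * (x ^ (1 + (\<Sum>i\<in>S. e1 (\<sigma> i))) * y ^ (ub + (\<Sum>i\<in>S. e2 (\<sigma> i)))))"
    by (simp only: expand)
  also have "\<dots> = (\<Sum>x\<in>(UNIV::'a set). \<Sum>\<sigma>\<in>S \<rightarrow>\<^sub>E I. \<Sum>y\<in>K. (\<Prod>i\<in>S. cc i (\<sigma> i)) * (x ^ (1 + (\<Sum>i\<in>S. e1 (\<sigma> i))) * y ^ (ub + (\<Sum>i\<in>S. e2 (\<sigma> i)))))"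
    by (rule sum.cong[OF refl], rule sum.swap)
  also have "\<dots> = (\<Sum>\<sigma>\<in>S \<rightarrow>\<^sub>E I. \<Sum>x\<in>(UNIV::'a set). \<Sum>y\<in>K. (\<Prod>i\<in>S. cc i (\<sigma> i)) * (x ^ (1 + (\<Sum>i\<in>S. e1 (\<sigma> i))) * y ^ (ub + (\<Sum>i\<in>S. e2 (\<sigma> i)))))"
    by (rule sum.swap)
  also have "\<dots> = (\<Sum>\<sigma>\<in>S \<rightarrow>\<^sub>E I. (\<Prod>i\<in>S. cc i (\<sigma> i)) *
       ((\<Sum>x\<in>(UNIV::'a set). x ^ (1 + (\<Sum>i\<in>S. e1 (\<sigma> i)))) * (\<Sum>y\<in>K. y ^ (ub + (\<Sum>i\<in>S. e2 (\<sigma> i))))))"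
  proof (rule sum.cong[OF refl])
    fix \<sigma>
    define a where "a = 1 + (\<Sum>i\<in>S. e1 (\<sigma> i))"
    define b where "b = ub + (\<Sum>i\<in>S. e2 (\<sigma> i))"
    define C where "C = (\<Prod>i\<in>S. cc i (\<sigma> i))"
    have "C * ((\<Sum>x\<in>(UNIV::'a set). x ^ a) * (\<Sum>y\<in>K. y ^ b)) = (\<Sum>x\<in>(UNIV::'a set). \<Sum>y\<in>K. C * (x ^ a * y ^ b))"
    proof -
      have "(\<Sum>x\<in>(UNIV::'a set). x ^ a) * (\<Sum>y\<in>K. y ^ b) = (\<Sum>x\<in>(UNIV::'a set). \<Sum>y\<in>K. x ^ a * y ^ b)"
        by (rule sum_product)
      hence "C * ((\<Sum>x\<in>(UNIV::'a set). x ^ a) * (\<Sum>y\<in>K. y ^ b)) = C * (\<Sum>x\<in>(UNIV::'a set). \<Sum>y\<in>K. x ^ a * y ^ b)"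
        by simp
      also have "\<dots> = (\<Sum>x\<in>(UNIV::'a set). \<Sum>y\<in>K. C * (x ^ a * y ^ b))" by (simp only: sum_distrib_left)
      finally show ?thesis .
    qed
    thus "(\<Sum>x\<in>(UNIV::'a set). \<Sum>y\<in>K. (\<Prod>i\<in>S. cc i (\<sigma> i)) * (x ^ (1 + (\<Sum>i\<in>S. e1 (\<sigma> i))) * y ^ (ub + (\<Sum>i\<in>S. e2 (\<sigma> i))))) =
       (\<Prod>i\<in>S. cc i (\<sigma> i)) * ((\<Sum>x\<in>(UNIV::'a set). x ^ (1 + (\<Sum>i\<in>S. e1 (\<sigma> i)))) * (\<Sum>y\<in>K. y ^ (ub + (\<Sum>i\<in>S. e2 (\<sigma> i)))))"
      unfolding a_def b_def C_def by simp
  qed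
  also have "\<dots> = 0" by (rule sum.neutral, intro ballI) (simp only: key_factor[OF fS cS ub] mult_zero_right)
  finally show ?thesis .
qed

end

context ffs begin

abbreviation "D \<equiv> (UNIV :: 'a set) \<times> K"
abbreviation "nn \<equiv> (r + 1) * m"

lemma D_card: "card D = 2 ^ nn"
  by (simp add: card_cartesian_product card_K card power_add[symmetric] algebra_simps)

lemma coord_iso_exists: "\<exists>\<phi>. F2_coord_iso nn \<phi> D"
proof -
  have c2: "\<forall>x::'a \<times> 'a. x + x = 0"
    using c2_add_self[OF char2] by (simp add: prod_eq_iff)
  have z: "(0::'a\<times>'a) \<in> D" using zero_K by (simp add: zero_prod_def)
  have cl: "\<forall>x\<in>D. \<forall>y\<in>D. x + y \<in> D" using K_add by (auto simp: plus_prod_def)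
  obtain b where bij: "bij_betw (lsum nn b) (bvecs nn) D"
    using greedy[OF c2 z cl _ D_card] by auto
  have "F2_coord_iso nn (lsum nn b) D"
    unfolding F2_coord_iso_def using bij lsum_xor[OF c2, of nn b] by simp
  thus ?thesis by blast
qed

definition "phi = (SOME \<phi>. F2_coord_iso nn \<phi> D)"

lemma phi_iso: "F2_coord_iso nn phi D"
  unfolding phi_def using someI_ex[OF coord_iso_exists] .

lemma phi_bij: "bij_betw phi (bvecs nn) D" using phi_iso unfolding F2_coord_iso_def by simp

lemma phi_xor: "v \<in> bvecs nn \<Longrightarrow> w \<in> bvecs nn \<Longrightarrow> phi (\<lambda>i. v i \<noteq> w i) = phi v + phi w"
  using phi_iso unfolding F2_coord_iso_def by (simp add: prod_eq_iff)

lemma phi_zero: "phi (\<lambda>_. False) = 0"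
proof -
  have f: "(\<lambda>_. False) \<in> bvecs nn" unfolding bvecs_def by simp
  have "phi (\<lambda>i. False \<noteq> False) = phi (\<lambda>_. False) + phi (\<lambda>_. False)" by (rule phi_xor[OF f f])
  thus ?thesis using c2_add_self[OF char2] by (simp add: prod_eq_iff)
qed

lemma phi_ind: "T \<subseteq> {..<nn} \<Longrightarrow> phi (ind T) = (\<Sum>l\<in>T. phi (ind {l}))"
proof -
  assume T: "T \<subseteq> {..<nn}"
  have "finite T" using T finite_subset by auto
  thus ?thesis using T
  proof (induction T rule: finite_induct)
    case empty
    have "ind {} = (\<lambda>_. False)" unfolding ind_def by simp
    then show ?case using phi_zero by simp
  next
    case (insert l T)
    have e: "ind (insert l T) = (\<lambda>i. ind T i \<noteq> ind {l} i)" using insert(2) unfolding ind_def by auto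
    have "phi (ind (insert l T)) = phi (ind T) + phi (ind {l})"
      unfolding e by (rule phi_xor) (use insert(4) in \<open>auto intro: ind_bvecs\<close>)
    then show ?case using insert by (simp add: add.commute)
  qed
qed

end

context ffs begin

lemma ubar_pos:
  assumes cop: "gcd u (2 ^ m - 1) = 1" and nd: "\<not> M dvd i"
  shows "(u * int i) mod (2 ^ m - 1) \<noteq> 0"
proof
  have Mi: "(2::int) ^ m - 1 = int M" by (simp add: of_nat_diff)
  assume "(u * int i) mod (2 ^ m - 1) = 0"
  hence d: "int M dvd u * int i" unfolding Mi by (simp only: dvd_eq_mod_eq_0)
  have "gcd u (int M) = 1" using cop unfolding Mi .
  hence "coprime (int M) u" by (simp only: coprime_iff_gcd_eq_1 gcd.commute)
  hence "int M dvd int i" using d coprime_dvd_mult_right_iff by blast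
  hence "M dvd i" by (simp only: int_dvd_int_iff)
  thus False using nd by simp
qed

lemma wb1:
  assumes cop: "gcd u (2 ^ m - 1) = 1" and i: "i \<in> {1..N-2}" and nd: "\<not> M dvd i"
  shows "wt i + wt (2 ^ m - 1 - nat ((u * int i) mod (2 ^ m - 1))) \<le> nn - 2"
proof -
  have "i < 2 ^ (r * m) - 1" using i N_ge by auto
  hence w1: "wt i < r * m" by (rule wt_lt_mask)
  define a where "a = (u * int i) mod (2 ^ m - 1)"
  have "(2::int) ^ 3 \<le> 2 ^ m" using m_ge by (intro power_increasing) auto
  hence ip: "(2::int) ^ m - 1 > 0" by simp
  have a0: "a \<noteq> 0" unfolding a_def by (rule ubar_pos[OF cop nd])
  have "a \<ge> 0" unfolding a_def using ip by simp
  hence "nat a \<ge> 1" using a0 by simp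
  hence "2 ^ m - 1 - nat a < 2 ^ m - 1" using M_ge by simp
  hence w2: "wt (2 ^ m - 1 - nat a) < m" by (rule wt_lt_mask)
  show ?thesis using w1 w2 unfolding a_def by (simp add: algebra_simps)
qed

lemma wb2:
  assumes j: "j \<in> {1..Q-1}"
  shows "wt (M * j) + wt M \<le> nn - 2"
proof -
  have Mj: "M * j \<le> N - 1 - M"
  proof -
    have "M * j \<le> M * (Q - 1)" using j by simp
    also have "\<dots> = N - 1 - M" using MQ by (simp add: right_diff_distrib')
    finally show ?thesis .
  qed
  have "wt (M * j) \<le> r * m - 2"
  proof (rule wt_le_minus2)
    show "M * j < 2 ^ (r * m)" using Mj N_ge by simp
    show "M * j \<noteq> 2 ^ (r * m) - 1" using Mj M_ge N_ge by simp
    show "r * m \<ge> 2" using rm_ge by simp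
    fix t show "M * j \<noteq> 2 ^ (r * m) - 1 - 2 ^ t"
    proof
      assume e: "M * j = 2 ^ (r * m) - 1 - 2 ^ t"
      have j1: "1 \<le> j" using j by simp
      have "M * 1 \<le> M * j" by (rule mult_le_mono2[OF j1])
      hence "M \<le> M * j" by (simp only: mult_1_right)
      with M_ge have "7 \<le> M * j" by (rule le_trans)
      hence le: "2 ^ t \<le> N - 1" using e by arith
      have "N - 1 = M * j + 2 ^ t" using e le by simp
      hence "M dvd M * j + 2 ^ t" using M_dvd by simp
      hence "M dvd 2 ^ t" by (simp add: dvd_add_right_iff)
      hence "M = 1" using odd_dvd_pow2 M_odd by blast
      thus False using M_ge by simp
    qed
  qed
  moreover have "wt M = m" by (rule wt_mask)
  ultimately show ?thesis using rm_ge by (simp add: algebra_simps)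
qed

lemma deg_upper:
  assumes cop: "gcd u (2 ^ m - 1) = 1"
  shows "anf_degree nn ((\<lambda>p. p \<in> supp) \<circ> phi) \<le> nn - 2"
proof (rule anf_upper)
  fix S assume Sn: "S \<subseteq> {..<nn}" and cS: "nn - 2 < card S"
  have fS: "finite S" using Sn finite_subset by auto
  define X where "X l = fst (phi (ind {l}))" for l
  define Y where "Y l = snd (phi (ind {l}))" for l
  have pT: "phi (ind T) = ((\<Sum>l\<in>T. X l), (\<Sum>l\<in>T. Y l))" if "T \<in> Pow S" for T
    using phi_ind[of T] that Sn unfolding X_def Y_def by (auto simp: prod_eq_iff fst_sum snd_sum)
  have YK: "(\<Sum>l\<in>T. Y l) \<in> K" if "T \<in> Pow S" for T
  proof -
    have "ind T \<in> bvecs nn" using that Sn by (intro ind_bvecs) auto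
    hence "phi (ind T) \<in> D" using phi_bij unfolding bij_betw_def by auto
    thus ?thesis using pT[OF that] by auto
  qed
  define C1 where "C1 i = inverse (\<alpha> ^ (i * s)) * (1 + inverse (\<alpha> ^ i)) ^ (2 ^ (r * m - 1) - 1)" for i
  define e where "e i = 2 ^ m - 1 - nat ((u * int i) mod (2 ^ m - 1))" for i
  define C2 where "C2 j = inverse (\<alpha> ^ ((2 ^ m - 1) * j * s)) * (1 + inverse (\<alpha> ^ ((2 ^ m - 1) * j))) ^ (2 ^ (r * m - 1) - 1)" for j
  define S1 where "S1 = {i\<in>{1..(2::nat) ^ (r * m) - 2}. \<not> (2 ^ m - 1) dvd i}"
  define J where "J = {1..(2 ^ (r * m) - 1) div (2 ^ m - 1) - (1::nat)}"
  have "of_nat (card {T\<in>Pow S. ((\<lambda>p. p \<in> supp) \<circ> phi) (ind T)}) = (\<Sum>T\<in>Pow S. B (phi (ind T) \<in> supp))"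
    by (subst card_filter_of_nat) (simp_all add: fS)
  also have "\<dots> = (\<Sum>T\<in>Pow S. (\<Sum>i\<in>S1. C1 i * (\<Sum>l\<in>T. X l) ^ i * (\<Sum>l\<in>T. Y l) ^ e i)
        + (\<Sum>j\<in>J. C2 j * (\<Sum>l\<in>T. X l) ^ ((2 ^ m - 1) * j) * (\<Sum>l\<in>T. Y l) ^ (2 ^ m - 1)))"
    by (rule sum.cong[OF refl]) (simp only: pT formula[OF YK] C1_def C2_def e_def S1_def J_def)
  also have "\<dots> = (\<Sum>i\<in>S1. C1 i * (\<Sum>T\<in>Pow S. (\<Sum>l\<in>T. X l) ^ i * (\<Sum>l\<in>T. Y l) ^ e i))
        + (\<Sum>j\<in>J. C2 j * (\<Sum>T\<in>Pow S. (\<Sum>l\<in>T. X l) ^ ((2 ^ m - 1) * j) * (\<Sum>l\<in>T. Y l) ^ (2 ^ m - 1)))"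
    by (simp add: sum.distrib sum_distrib_left mult.assoc sum.swap[of _ "Pow S"])
  also have "\<dots> = 0"
  proof -
    have a: "(\<Sum>T\<in>Pow S. (\<Sum>l\<in>T. X l) ^ i * (\<Sum>l\<in>T. Y l) ^ e i) = 0" if "i \<in> S1" for i
    proof (rule mono_sum[OF fS])
      have "i \<in> {1..N-2}" "\<not> M dvd i" using that unfolding S1_def by auto
      thus "wt i + wt (e i) < card S" using wb1[OF cop] cS unfolding e_def by fastforce
    qed
    have b: "(\<Sum>T\<in>Pow S. (\<Sum>l\<in>T. X l) ^ ((2 ^ m - 1) * j) * (\<Sum>l\<in>T. Y l) ^ (2 ^ m - 1)) = 0" if "j \<in> J" for j
    proof (rule mono_sum[OF fS])
      have "j \<in> {1..Q-1}" using that unfolding J_def Q_def by simp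
      thus "wt ((2 ^ m - 1) * j) + wt (2 ^ m - 1) < card S" using wb2 cS by fastforce
    qed
    show ?thesis using a b by simp
  qed
  finally have "of_nat (card {T\<in>Pow S. ((\<lambda>p. p \<in> supp) \<circ> phi) (ind T)}) = (0::'a)" .
  hence "\<not> odd (card {T\<in>Pow S. ((\<lambda>p. p \<in> supp) \<circ> phi) (ind T)})" using B_odd by (metis zero_neq_one)
  moreover have "{T. T \<subseteq> S \<and> ((\<lambda>p. p \<in> supp) \<circ> phi) (ind T)} = {T\<in>Pow S. ((\<lambda>p. p \<in> supp) \<circ> phi) (ind T)}" by auto
  ultimately show "even (card {T. T \<subseteq> S \<and> ((\<lambda>p. p \<in> supp) \<circ> phi) (ind T)})" by simp
qed

end

context ff begin

lemma anf_exists: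
  "\<exists>a. (\<forall>S. S \<subseteq> {..<n} \<and> a S \<longrightarrow> card S \<le> n) \<and>
      (\<forall>v\<in>bvecs n. g v = odd (card {S. S \<subseteq> {..<n} \<and> a S \<and> (\<forall>i\<in>S. v i)}))"
proof -
  define a where "a S = odd (card {T. T \<subseteq> S \<and> g (ind T)})" for S
  have deg: "\<forall>S. S \<subseteq> {..<n} \<and> a S \<longrightarrow> card S \<le> n"
    using card_mono[of "{..<n}"] by fastforce
  have rep: "\<forall>v\<in>bvecs n. g v = odd (card {S. S \<subseteq> {..<n} \<and> a S \<and> (\<forall>i\<in>S. v i)})"
  proof
    fix v assume v: "v \<in> bvecs n"
    define V where "V = {i. v i}"
    have vV: "v = ind V" and Vn: "V \<subseteq> {..<n}" using bvecs_ind[OF v] unfolding V_def by auto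
    have fV: "finite V" using Vn finite_subset by auto
    have set: "{S. S \<subseteq> {..<n} \<and> a S \<and> (\<forall>i\<in>S. v i)} = {S\<in>Pow V. a S}"
      unfolding V_def using Vn V_def by auto
    have "B (odd (card {S\<in>Pow V. a S})) = (\<Sum>S\<in>Pow V. B (a S))"
      unfolding B_odd by (rule card_filter_of_nat) (simp add: fV)
    also have "\<dots> = (\<Sum>S\<in>Pow V. \<Sum>T\<in>Pow S. B (g (ind T)))"
    proof (rule sum.cong[OF refl])
      fix S assume "S \<in> Pow V"
      hence fS: "finite S" using fV finite_subset by auto
      have "{T. T \<subseteq> S \<and> g (ind T)} = {T\<in>Pow S. g (ind T)}" by auto
      thus "B (a S) = (\<Sum>T\<in>Pow S. B (g (ind T)))"
        unfolding a_def B_odd using card_filter_of_nat[of "Pow S" "\<lambda>T. g (ind T)"] fS by simp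
    qed
    also have "\<dots> = B (g (ind V))" by (rule mobius[OF char2 fV])
    finally have "odd (card {S\<in>Pow V. a S}) = g (ind V)" by (rule B_inj)
    thus "g v = odd (card {S. S \<subseteq> {..<n} \<and> a S \<and> (\<forall>i\<in>S. v i)})" using set vV by simp
  qed
  show ?thesis using deg rep by blast
qed

end

context ffs begin

lemma supp_iff:
  assumes yK: "y \<in> K" and y0: "y \<noteq> 0"
  shows "(x, y) \<in> supp \<longleftrightarrow> (\<exists>\<gamma>\<in>Delta. x = \<gamma> * y powi u)"
  unfolding supp_def Delta_def using y0 yK unfolding K_def by auto

lemma supp_y0: "(x, 0) \<notin> supp" unfolding supp_def by auto

lemma Delta_image: "Delta = (\<lambda>t. \<alpha> ^ (s + t)) ` {..<L}"
proof
  show "Delta \<subseteq> (\<lambda>t. \<alpha> ^ (s + t)) ` {..<L}"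
  proof
    fix z assume "z \<in> Delta"
    then obtain i where "s \<le> i" "i \<le> s + L - 1" "z = \<alpha> ^ i" unfolding Delta_def by auto
    hence "i - s < L" "z = \<alpha> ^ (s + (i - s))" using L_facts by auto
    thus "z \<in> (\<lambda>t. \<alpha> ^ (s + t)) ` {..<L}" by blast
  qed
  show "(\<lambda>t. \<alpha> ^ (s + t)) ` {..<L} \<subseteq> Delta"
    unfolding Delta_def using L_facts by (auto intro!: exI[of _ "s + _"])
qed

lemma Delta_inj: "inj_on (\<lambda>t. \<alpha> ^ (s + t)) {..<L}"
proof (rule inj_onI)
  fix t t0 assume t: "t \<in> {..<L}" and t0: "t0 \<in> {..<L}" and e: "\<alpha> ^ (s + t) = \<alpha> ^ (s + t0)"
  have eq: "(s + t) mod (N - 1) = (s + t0) mod (N - 1)" using e alpha_pow_eq_iff by simp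
  have lt: "t < N - 1" "t0 < N - 1" using t t0 L_facts by auto
  show "t = t0"
  proof (rule ccontr)
    assume ne: "t \<noteq> t0"
    show False
    proof (cases "t < t0")
      case True
      hence "(N - 1) dvd (s + t0) - (s + t)" using eq by (subst mod_eq_dvd_iff_nat[symmetric]) auto
      hence "(N - 1) dvd (t0 - t)" by simp
      moreover have "t0 - t < N - 1" using lt by arith
      ultimately show False using True nat_dvd_not_less[of "t0 - t" "N - 1"] by simp
    next
      case False
      hence "t0 < t" using ne by simp
      hence "(N - 1) dvd (s + t) - (s + t0)" using eq by (subst mod_eq_dvd_iff_nat[symmetric]) auto
      hence "(N - 1) dvd (t - t0)" by simp
      moreover have "t - t0 < N - 1" using lt by arith
      ultimately show False using \<open>t0 < t\<close> nat_dvd_not_less[of "t - t0" "N - 1"] by simp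
    qed
  qed
qed

lemma sigma_nz: "(\<Sum>\<gamma>\<in>Delta. \<gamma>) \<noteq> 0"
proof -
  have "(\<Sum>\<gamma>\<in>Delta. \<gamma>) = (\<Sum>t<L. \<alpha> ^ (s + t))"
    unfolding Delta_image by (rule sum.reindex[OF Delta_inj, unfolded o_def])
  also have "\<dots> = \<alpha> ^ s * (\<Sum>t<L. \<alpha> ^ t)" by (simp add: power_add sum_distrib_left)
  also have "(\<Sum>t<L. \<alpha> ^ t) = (\<alpha> ^ L - 1) / (\<alpha> - 1)"
  proof (rule geometric_sum)
    show "\<alpha> \<noteq> 1"
    proof
      assume "\<alpha> = 1"
      hence "\<alpha> ^ 1 = 1" by simp
      hence "(N - 1) dvd 1" using alpha_pow_one_iff by blast
      thus False using N_ge by simp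
    qed
  qed
  finally have e: "(\<Sum>\<gamma>\<in>Delta. \<gamma>) = \<alpha> ^ s * ((\<alpha> ^ L - 1) / (\<alpha> - 1))" .
  have "\<alpha> ^ L \<noteq> 1"
  proof
    assume "\<alpha> ^ L = 1"
    hence "(N - 1) dvd L" using alpha_pow_one_iff by blast
    thus False using L_facts nat_dvd_not_less[of L "N - 1"] by simp
  qed
  moreover have "\<alpha> \<noteq> 1"
  proof
    assume "\<alpha> = 1"
    hence "\<alpha> ^ 1 = 1" by simp
    hence "(N - 1) dvd 1" using alpha_pow_one_iff by blast
    thus False using N_ge by simp
  qed
  ultimately show ?thesis unfolding e using alpha_nz by simp
qed

definition "ub = nat ((- u) mod int M)"

lemma ub_facts:
  assumes cop: "gcd u (2 ^ m - 1) = 1"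
  shows "0 < ub" "ub < M" "\<exists>c. int ub + u = int M * c"
proof -
  have Mi: "(2::int) ^ m - 1 = int M" by (simp add: of_nat_diff)
  have ip: "int M > 0" unfolding of_nat_0_less_iff using M_ge by simp
  have a: "0 \<le> (- u) mod int M" "(- u) mod int M < int M"
    by (rule pos_mod_sign[OF ip], rule pos_mod_bound[OF ip])
  have nz: "(- u) mod int M \<noteq> 0"
  proof
    assume "(- u) mod int M = 0"
    hence "int M dvd - u" by (simp only: dvd_eq_mod_eq_0)
    hence "int M dvd u" by simp
    hence "gcd u (int M) = int M" by (simp add: gcd.commute gcd_proj1_iff)
    hence "int M = 1" using cop unfolding Mi by simp
    hence "M = 1" by (simp only: of_nat_eq_1_iff)
    thus False using M_ge by simp
  qed
  show "0 < ub" unfolding ub_def using a nz by simp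
  show "ub < M" unfolding ub_def using a by (simp add: nat_less_iff)
  have "int ub = (- u) mod int M" unfolding ub_def using a by simp
  also have "\<dots> = - u - int M * ((- u) div int M)" by (simp add: minus_div_mult_eq_mod[symmetric] mult.commute)
  finally show "\<exists>c. int ub + u = int M * c" by (intro exI[of _ "- ((- u) div int M)"]) simp
qed

lemma E_supp:
  assumes cop: "gcd u (2 ^ m - 1) = 1"
  shows "(\<Sum>x\<in>(UNIV::'a set). \<Sum>y\<in>K. x * y ^ ub * B ((x, y) \<in> supp)) = (\<Sum>\<gamma>\<in>Delta. \<gamma>)"
proof -
  obtain cc where cc: "int ub + u = int M * cc" using ub_facts[OF cop] by blast
  define \<sigma> where "\<sigma> = (\<Sum>\<gamma>\<in>Delta. \<gamma>)"
  have inner: "(\<Sum>x\<in>(UNIV::'a set). x * y ^ ub * B ((x, y) \<in> supp)) = (if y = 0 then 0 else \<sigma>)"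
    if yK: "y \<in> K" for y
  proof (cases "y = 0")
    case True then show ?thesis using supp_y0 by simp
  next
    case False
    have yM: "y ^ M = 1" using K_nz_iff[OF False] yK by simp
    have yu0: "y powi u \<noteq> 0" using False by simp
    define img where "img = (\<lambda>\<gamma>. \<gamma> * y powi u) ` Delta"
    have mem: "(x, y) \<in> supp \<longleftrightarrow> x \<in> img" for x unfolding supp_iff[OF yK False] img_def by auto
    have "(\<Sum>x\<in>(UNIV::'a set). x * y ^ ub * B ((x, y) \<in> supp)) = y ^ ub * (\<Sum>x\<in>(UNIV::'a set). if x \<in> img then x else 0)"
      unfolding mem sum_distrib_left by (rule sum.cong) auto
    also have "(\<Sum>x\<in>(UNIV::'a set). if x \<in> img then x else 0) = (\<Sum>x\<in>img. x)"
      by (simp add: sum.inter_restrict[symmetric])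
    also have "\<dots> = (\<Sum>\<gamma>\<in>Delta. \<gamma> * y powi u)" unfolding img_def
      by (rule sum.reindex[unfolded o_def]) (use yu0 in \<open>auto simp: inj_on_def\<close>)
    also have "\<dots> = y powi u * \<sigma>" unfolding \<sigma>_def sum_distrib_right[symmetric] by (rule mult.commute)
    also have "y ^ ub * (y powi u * \<sigma>) = (y powi (int ub + u)) * \<sigma>"
      using False by (simp add: power_int_add mult.assoc)
    also have "y powi (int ub + u) = 1" unfolding cc using powi_period[OF False yM, of 0 cc] by simp
    finally show ?thesis using False by simp
  qed
  have "(\<Sum>x\<in>(UNIV::'a set). \<Sum>y\<in>K. x * y ^ ub * B ((x, y) \<in> supp))
      = (\<Sum>y\<in>K. \<Sum>x\<in>(UNIV::'a set). x * y ^ ub * B ((x, y) \<in> supp))" by (rule sum.swap)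
  also have "\<dots> = (\<Sum>y\<in>K. if y = 0 then 0 else \<sigma>)" by (rule sum.cong[OF refl]) (rule inner)
  also have "\<dots> = (\<Sum>y\<in>K - {0}. \<sigma>)" by (rule sum.mono_neutral_cong_right) auto
  also have "\<dots> = of_nat M * \<sigma>" using K_nonzero_image card_image[OF inj_beta] by simp
  also have "(of_nat M :: 'a) = 1"
  proof -
    have h: "(of_nat M::'a) = (if even M then 0 else 1)" by (rule c2_of_nat[OF char2])
    show ?thesis using M_odd by (simp only: h if_False)
  qed
  finally show ?thesis unfolding \<sigma>_def by simp
qed

end

context ffs begin

lemma deg_lower:
  assumes cop: "gcd u (2 ^ m - 1) = 1"
  shows "r * m \<le> anf_degree nn ((\<lambda>p. p \<in> supp) \<circ> phi)"
proof -
  define g where "g = (\<lambda>p. p \<in> supp) \<circ> phi"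
  define P where "P d = (\<exists>a. (\<forall>S. S \<subseteq> {..<nn} \<and> a S \<longrightarrow> card S \<le> d) \<and>
      (\<forall>v\<in>bvecs nn. g v = odd (card {S. S \<subseteq> {..<nn} \<and> a S \<and> (\<forall>i\<in>S. v i)})))" for d
  have ex: "\<exists>d. P d" unfolding P_def using anf_exists[of nn g] by blast
  have "P (LEAST d. P d)" by (rule LeastI_ex[OF ex])
  moreover have "anf_degree nn g = (LEAST d. P d)" unfolding anf_degree_def P_def by (rule refl)
  ultimately have "P (anf_degree nn g)" by simp
  then obtain a where deg: "\<forall>S. S \<subseteq> {..<nn} \<and> a S \<longrightarrow> card S \<le> anf_degree nn g"
    and rep: "\<forall>v\<in>bvecs nn. g v = odd (card {S. S \<subseteq> {..<nn} \<and> a S \<and> (\<forall>i\<in>S. v i)})"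
    unfolding P_def by blast
  show ?thesis unfolding g_def[symmetric]
  proof (rule ccontr)
    assume "\<not> r * m \<le> anf_degree nn g"
    hence dlt: "anf_degree nn g < r * m" by simp
    define A where "A = {S. S \<subseteq> {..<nn} \<and> a S}"
    have fA: "finite A" unfolding A_def by (rule finite_subset[of _ "Pow {..<nn}"]) auto
    have cA: "finite S \<and> card S < r * m" if "S \<in> A" for S
    proof
      have S: "S \<subseteq> {..<nn}" "a S" using that unfolding A_def by auto
      show "finite S" using S(1) finite_subset by auto
      have "card S \<le> anf_degree nn g" using deg S by blast
      thus "card S < r * m" using dlt by simp
    qed
    define psi where "psi = inv_into (bvecs nn) phi"
    have img: "phi ` bvecs nn = D" using phi_bij unfolding bij_betw_def by auto
    have psi: "psi p \<in> bvecs nn \<and> phi (psi p) = p" if "p \<in> D" for p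
    proof
      show "psi p \<in> bvecs nn" unfolding psi_def by (rule inv_into_into) (use img that in simp)
      show "phi (psi p) = p" unfolding psi_def by (rule bij_betw_inv_into_right[OF phi_bij that])
    qed
    have psi_add: "psi (p + q) = (\<lambda>i. psi p i \<noteq> psi q i)" if "p \<in> D" "q \<in> D" for p q
    proof -
      have xb: "(\<lambda>i. psi p i \<noteq> psi q i) \<in> bvecs nn" using psi[OF that(1)] psi[OF that(2)] unfolding bvecs_def by auto
      have "phi (\<lambda>i. psi p i \<noteq> psi q i) = phi (psi p) + phi (psi q)"
        by (rule phi_xor) (use psi that in auto)
      also have "\<dots> = p + q" using psi that by simp
      finally have "phi (\<lambda>i. psi p i \<noteq> psi q i) = p + q" .
      hence "psi (p + q) = psi (phi (\<lambda>i. psi p i \<noteq> psi q i))" by simp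
      also have "\<dots> = (\<lambda>i. psi p i \<noteq> psi q i)"
      proof -
        have inj: "inj_on phi (bvecs nn)" using phi_bij unfolding bij_betw_def by simp
        show ?thesis using inv_into_f_f[OF inj xb] unfolding psi_def by simp
      qed
      finally show ?thesis .
    qed
    define W where "W i p = B (psi p i)" for i p
    have Wadd: "W i (p + q) = W i p + W i q" if "p \<in> D" "q \<in> D" for i p q
      unfolding W_def psi_add[OF that] by (rule B_xor)
    have "\<forall>i. \<exists>c. \<forall>x\<in>(UNIV::'a set). W i (x, 0) = (\<Sum>t<r*m. c t * x ^ (2 ^ t))"
    proof
      fix i
      show "\<exists>c. \<forall>x\<in>(UNIV::'a set). W i (x, 0) = (\<Sum>t<r*m. c t * x ^ (2 ^ t))"
      proof (rule linearized)
        show "\<forall>x\<in>(UNIV::'a set). \<forall>y\<in>UNIV. W i (x + y, 0) = W i (x, 0) + W i (y, 0)"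
        proof (intro ballI)
          fix x y :: 'a
          have "(x + y, 0::'a) = (x, 0) + (y, 0)" by (simp add: plus_prod_def)
          thus "W i (x + y, 0) = W i (x, 0) + W i (y, 0)" using Wadd[of "(x,0)" "(y,0)" i] zero_K by simp
        qed
      qed (simp_all add: card)
    qed
    hence "\<exists>c. \<forall>i. \<forall>x\<in>(UNIV::'a set). W i (x, 0) = (\<Sum>t<r*m. c i t * x ^ (2 ^ t))" by (rule choice)
    then obtain c where c: "\<forall>i. \<forall>x\<in>(UNIV::'a set). W i (x, 0) = (\<Sum>t<r*m. c i t * x ^ (2 ^ t))"
      by blast
    have "\<forall>i. \<exists>d. \<forall>y\<in>K. W i (0, y) = (\<Sum>t<m. d t * y ^ (2 ^ t))"
    proof
      fix i
      show "\<exists>d. \<forall>y\<in>K. W i (0, y) = (\<Sum>t<m. d t * y ^ (2 ^ t))"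
      proof (rule linearized)
        show "\<forall>x\<in>K. \<forall>y\<in>K. W i (0, x + y) = W i (0, x) + W i (0, y)"
        proof (intro ballI)
          fix x y assume "x \<in> K" "y \<in> K"
          have "(0::'a, x + y) = (0, x) + (0, y)" by (simp add: plus_prod_def)
          thus "W i (0, x + y) = W i (0, x) + W i (0, y)" using Wadd[of "(0,x)" "(0,y)" i] \<open>x \<in> K\<close> \<open>y \<in> K\<close> by simp
        qed
      qed (simp_all add: card_K zero_K K_add)
    qed
    hence "\<exists>d. \<forall>i. \<forall>y\<in>K. W i (0, y) = (\<Sum>t<m. d i t * y ^ (2 ^ t))" by (rule choice)
    then obtain d where d: "\<forall>i. \<forall>y\<in>K. W i (0, y) = (\<Sum>t<m. d i t * y ^ (2 ^ t))"
      by blast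
    have Bf: "B ((x, y) \<in> supp) = (\<Sum>S\<in>A. \<Prod>i\<in>S. (\<Sum>t<r*m. c i t * x ^ (2 ^ t)) + (\<Sum>t<m. d i t * y ^ (2 ^ t)))"
      if yK: "y \<in> K" for x y
    proof -
      have p: "(x, y) \<in> D" using yK by simp
      have "B ((x, y) \<in> supp) = B (g (psi (x, y)))" unfolding g_def using psi[OF p] by simp
      also have "\<dots> = (\<Sum>S\<in>A. \<Prod>i\<in>S. B (psi (x, y) i))"
        unfolding A_def by (rule anf_rep_sum[OF rep]) (use psi[OF p] in simp)
      also have "\<dots> = (\<Sum>S\<in>A. \<Prod>i\<in>S. (\<Sum>t<r*m. c i t * x ^ (2 ^ t)) + (\<Sum>t<m. d i t * y ^ (2 ^ t)))"
      proof (intro sum.cong[OF refl] prod.cong[OF refl])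
        fix i
        have "(x, y) = (x, 0) + (0, y)" by (simp add: plus_prod_def)
        hence "W i (x, y) = W i (x, 0) + W i (0, y)" using Wadd[of "(x,0)" "(0,y)" i] zero_K yK by simp
        moreover have "W i (x, 0) = (\<Sum>t<r*m. c i t * x ^ (2 ^ t))" using c by blast
        moreover have "W i (0, y) = (\<Sum>t<m. d i t * y ^ (2 ^ t))" using d yK by blast
        ultimately show "B (psi (x, y) i) = (\<Sum>t<r*m. c i t * x ^ (2 ^ t)) + (\<Sum>t<m. d i t * y ^ (2 ^ t))"
          unfolding W_def by simp
      qed
      finally show ?thesis .
    qed
    define F where "F S x y = x * y ^ ub * (\<Prod>i\<in>S. (\<Sum>t<r*m. c i t * x ^ (2 ^ t)) + (\<Sum>t<m. d i t * y ^ (2 ^ t)))" for S x y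
    have "(\<Sum>\<gamma>\<in>Delta. \<gamma>) = (\<Sum>x\<in>(UNIV::'a set). \<Sum>y\<in>K. x * y ^ ub * B ((x, y) \<in> supp))"
      by (rule E_supp[OF cop, symmetric])
    also have "\<dots> = (\<Sum>x\<in>(UNIV::'a set). \<Sum>y\<in>K. \<Sum>S\<in>A. F S x y)"
      unfolding F_def by (intro sum.cong[OF refl]) (simp add: Bf sum_distrib_left)
    also have "\<dots> = (\<Sum>x\<in>(UNIV::'a set). \<Sum>S\<in>A. \<Sum>y\<in>K. F S x y)"
      by (rule sum.cong[OF refl], rule sum.swap)
    also have "\<dots> = (\<Sum>S\<in>A. \<Sum>x\<in>(UNIV::'a set). \<Sum>y\<in>K. F S x y)" by (rule sum.swap)
    also have "\<dots> = 0"
    proof (rule sum.neutral, intro ballI)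
      fix S assume "S \<in> A"
      show "(\<Sum>x\<in>(UNIV::'a set). \<Sum>y\<in>K. F S x y) = 0"
        unfolding F_def by (rule E0) (use cA[OF \<open>S \<in> A\<close>] ub_facts[OF cop] in auto)
    qed
    finally show False using sigma_nz by simp
  qed
qed

end

theorem theorem1:
  fixes \<alpha> :: "'a::{field,finite}" and r m s :: nat and u :: int
  assumes card: "card (UNIV :: 'a set) = 2 ^ (r * m)"
    and r_odd: "odd r" and r_pos: "r \<ge> 1" and m_ge: "m \<ge> 3"
    and u_coprime: "gcd u (2 ^ m - 1) = 1"
    and primitive: "\<forall>z::'a. z \<noteq> 0 \<longrightarrow> (\<exists>k::nat. z = \<alpha> ^ k)"
    and s_le: "s \<le> 2 ^ (r * m) - 2"
  defines "K \<equiv> {y::'a. y ^ (2 ^ m) = y}"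
    and "supp \<equiv> {(\<gamma> * y powi u, y) | \<gamma> y. y ^ (2 ^ m) = y \<and> y \<noteq> 0 \<and> (\<exists>i. s \<le> i \<and> i \<le> s + 2 ^ (r * m - 1) - 1 \<and> \<gamma> = \<alpha> ^ i)}"
    and "n \<equiv> (r + 1) * m"
  shows "(\<forall>x::'a. \<forall>y\<in>K.
            (if (x, y) \<in> supp then 1 else 0) =
              (\<Sum>i\<in>{i\<in>{1..2 ^ (r * m) - 2}. \<not> (2 ^ m - 1) dvd i}.
                 inverse (\<alpha> ^ (i * s)) * (1 + inverse (\<alpha> ^ i)) ^ (2 ^ (r * m - 1) - 1)
                 * x ^ i * y ^ (2 ^ m - 1 - nat ((u * int i) mod (2 ^ m - 1))))
            + (\<Sum>j\<in>{1..(2 ^ (r * m) - 1) div (2 ^ m - 1) - 1}.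
                 inverse (\<alpha> ^ ((2 ^ m - 1) * j * s))
                 * (1 + inverse (\<alpha> ^ ((2 ^ m - 1) * j))) ^ (2 ^ (r * m - 1) - 1)
                 * x ^ ((2 ^ m - 1) * j) * y ^ (2 ^ m - 1)))
         \<and> n - m \<le> bool_alg_deg n (UNIV \<times> K) (\<lambda>p. p \<in> supp)
         \<and> bool_alg_deg n (UNIV \<times> K) (\<lambda>p. p \<in> supp) \<le> n - 2"
proof -
  interpret F: ffs \<alpha> r m s u
    by unfold_locales (use card r_pos m_ge primitive in auto)
  have KK: "K = F.K" unfolding K_def F.K_def by simp
  have SS: "supp = F.supp" unfolding supp_def F.supp_def by simp
  have nn: "n = (r + 1) * m" unfolding n_def by simp
  have deg: "bool_alg_deg n (UNIV \<times> K) (\<lambda>p. p \<in> supp) = anf_degree ((r + 1) * m) ((\<lambda>p. p \<in> F.supp) \<circ> F.phi)"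
    unfolding bool_alg_deg_def F.phi_def KK SS nn ..
  show ?thesis
    apply (intro conjI)
    subgoal unfolding KK SS using F.formula by blast
    subgoal
    proof -
      have "n - m = r * m" unfolding n_def by (simp add: algebra_simps)
      thus ?thesis unfolding deg using F.deg_lower[OF u_coprime] by simp
    qed
    subgoal
    proof -
      have "anf_degree ((r + 1) * m) ((\<lambda>p. p \<in> F.supp) \<circ> F.phi) \<le> (r + 1) * m - 2"
        by (rule F.deg_upper[OF u_coprime])
      thus ?thesis using deg nn by simp
    qed
    done
qed

end
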